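(* Let $d\in\mathbb{N}$. There is a constant $C>0$ depending only on $d$ such that for every $f\in H^2_{\mathrm{mix}}(\mathbb{R}^d)$, $$ \sup_{\mathbf{k}\in\mathbb{Z}^d}\prod_{i=1}^d(1+|k_i|)^2\Big(\sum_{\mathbf{m}\in\mathbb{Z}^d}\big|[\mathcal{R}f(\cdot-\mathbf{m})]^\wedge(\mathbf{k})\big|^2\Big)^{1/2}\le C\|f\|_{H^2_{\mathrm{mix}}(\mathbb{R}^d)}. $$
   Context: $H^2_{\mathrm{mix}}(\mathbb{R}^d)$ is the space of real functions $f$ on $\mathbb{R}^d$ such that for every $e\subseteq\{1,\dots,d\}$ the weak derivative $\big(\prod_{i\in e}\partial^2/\partial x_i^2\big)f$ lies in $L_2(\mathbb{R}^d)$, normed by the square root of the sum of the squared $L_2$-norms of these derivatives. For $\mathbf{m}\in\mathbb{Z}^d$, $f(\cdot-\mathbf{m})$ denotes the function $\mathbf{x}\mapsto f(\mathbf{x}-\mathbf{m})$ restricted to $[0,1]^d$, and $\mathcal{R}$ is the tent transform $\mathcal{R}g(y_1,\dots,y_d)=g(|2y_1-1|,\dots,|2y_d-1|)$, a function on $\mathbb{T}^d\cong[0,1)^d$. For $g\in L_1(\mathbb{T}^d)$, $\hat g(\mathbf{k})=\int_{[0,1]^d}g(\mathbf{x})e^{-2\pi i\mathbf{k}^\top\mathbf{x}}\,d\mathbf{x}$. *)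

theory Defs
  imports "HOL-Analysis.Analysis"
begin

text \<open>Points of R^d are vectors of type real^'n, with d = CARD('n).\<close>

definition partial :: "'n::finite \<Rightarrow> (real^'n \<Rightarrow> real) \<Rightarrow> real^'n \<Rightarrow> real" where
  "partial i \<phi> x = deriv (\<lambda>t. \<phi> (x + t *\<^sub>R axis i 1)) 0"

primrec iter_partial :: "'n::finite list \<Rightarrow> (real^'n \<Rightarrow> real) \<Rightarrow> real^'n \<Rightarrow> real" where
  "iter_partial [] \<phi> = \<phi>"
| "iter_partial (i # is) \<phi> = partial i (iter_partial is \<phi>)"

definition test_fun :: "(real^'n::finite \<Rightarrow> real) \<Rightarrow> bool" where
  "test_fun \<phi> \<longleftrightarrow> compact (closure {x. \<phi> x \<noteq> 0})
     \<and> (\<forall>is. continuous_on UNIV (iter_partial is \<phi>))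
     \<and> (\<forall>is i x. ((\<lambda>t. iter_partial is \<phi> (x + t *\<^sub>R axis i 1))
                    has_real_derivative iter_partial (i # is) \<phi> x) (at 0))"

definition mix_op :: "'n::finite set \<Rightarrow> (real^'n \<Rightarrow> real) \<Rightarrow> real^'n \<Rightarrow> real" where
  "mix_op e \<phi> = iter_partial (concat (map (\<lambda>i. [i, i]) (SOME xs. distinct xs \<and> set xs = e))) \<phi>"

text \<open>g is the weak derivative prod_{i in e} d^2/dx_i^2 f (the sign (-1)^(2|e|) is 1).\<close>
definition weak_mix_deriv :: "'n::finite set \<Rightarrow> (real^'n \<Rightarrow> real) \<Rightarrow> (real^'n \<Rightarrow> real) \<Rightarrow> bool" where
  "weak_mix_deriv e f g \<longleftrightarrow>
     (\<forall>\<phi>. test_fun \<phi> \<longrightarrow>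
        integral\<^sup>L lborel (\<lambda>x. f x * mix_op e \<phi> x) = integral\<^sup>L lborel (\<lambda>x. g x * \<phi> x))"

definition L2 :: "(real^'n::finite \<Rightarrow> real) \<Rightarrow> bool" where
  "L2 g \<longleftrightarrow> g \<in> borel_measurable lborel \<and> integrable lborel (\<lambda>x. (g x)\<^sup>2)"

definition H2mix :: "(real^'n::finite \<Rightarrow> real) set" where
  "H2mix = {f. L2 f \<and> (\<forall>e. \<exists>g. L2 g \<and> weak_mix_deriv e f g)}"

definition H2mix_norm :: "(real^'n::finite \<Rightarrow> real) \<Rightarrow> real" where
  "H2mix_norm f = sqrt (\<Sum>e\<in>(UNIV :: 'n set set).
      integral\<^sup>L lborel (\<lambda>x. ((SOME g. L2 g \<and> weak_mix_deriv e f g) x)\<^sup>2))"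

definition tent :: "(real^'n::finite \<Rightarrow> 'a) \<Rightarrow> real^'n \<Rightarrow> 'a" where
  "tent g y = g (\<chi> i. \<bar>2 * y $ i - 1\<bar>)"

text \<open>Shift f(. - m), restricted to [0,1]^d by the integration domain below.\<close>
definition shift :: "(real^'n::finite \<Rightarrow> real) \<Rightarrow> int^'n \<Rightarrow> real^'n \<Rightarrow> real" where
  "shift f m x = f (x - (\<chi> i. real_of_int (m $ i)))"

definition fourier_coeff :: "(real^'n::finite \<Rightarrow> real) \<Rightarrow> int^'n \<Rightarrow> complex" where
  "fourier_coeff g k = (LINT x : cbox 0 1 | lborel.
      complex_of_real (g x) * cis (- 2 * pi * (\<Sum>i\<in>UNIV. real_of_int (k $ i) * x $ i)))"

end

theory Submission
  imports Defs "HOL-Analysis.Analysis" "HOL-Computational_Algebra.Polynomial"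
begin


fun Cn :: "nat \<Rightarrow> (real \<Rightarrow> real) \<Rightarrow> bool" where
  "Cn 0 u = True"
| "Cn (Suc n) u = ((\<forall>x. (u has_real_derivative deriv u x) (at x)) \<and> Cn n (deriv u))"

definition smooth :: "(real \<Rightarrow> real) \<Rightarrow> bool" where
  "smooth u \<longleftrightarrow> (\<forall>n. Cn n u)"

lemma deriv_eqI:
  assumes "\<And>x. (u has_real_derivative u' x) (at x)"
  shows "deriv u = u'"
  using assms DERIV_imp_deriv by blast

lemma Cn_SucI:
  assumes "\<And>x. (u has_real_derivative u' x) (at x)" "Cn n u'"
  shows "Cn (Suc n) u"
  using assms deriv_eqI[of u u'] by auto

lemma Cn_mono: "Cn (Suc n) u \<Longrightarrow> Cn n u"
proof (induction n arbitrary: u)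
  case 0 then show ?case by simp
next
  case (Suc n) then show ?case by auto
qed

lemma Cn_le: "Cn n u \<Longrightarrow> m \<le> n \<Longrightarrow> Cn m u"
proof (induction n)
  case 0 then show ?case by simp
next
  case (Suc n) then show ?case using Cn_mono le_Suc_eq by blast
qed

lemma Cn_const: "Cn n (\<lambda>x. c)"
proof (induction n arbitrary: c)
  case 0 then show ?case by simp
next
  case (Suc n)
  have "\<And>x. ((\<lambda>x. c) has_real_derivative (\<lambda>x. 0) x) (at x)" by simp
  then show ?case using Cn_SucI[of "\<lambda>x. c" "\<lambda>x. 0"] Suc by blast
qed

lemma Cn_add: "Cn n u \<Longrightarrow> Cn n v \<Longrightarrow> Cn n (\<lambda>x. u x + v x)"
proof (induction n arbitrary: u v)
  case 0 then show ?case by simp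
next
  case (Suc n)
  have "\<And>x. ((\<lambda>x. u x + v x) has_real_derivative (\<lambda>x. deriv u x + deriv v x) x) (at x)"
    using Suc.prems by (auto intro!: derivative_eq_intros)
  moreover have "Cn n (\<lambda>x. deriv u x + deriv v x)" using Suc by auto
  ultimately show ?case using Cn_SucI[of "\<lambda>x. u x + v x" "\<lambda>x. deriv u x + deriv v x"] by blast
qed

lemma Cn_mult: "Cn n u \<Longrightarrow> Cn n v \<Longrightarrow> Cn n (\<lambda>x. u x * v x)"
proof (induction n arbitrary: u v)
  case 0 then show ?case by simp
next
  case (Suc n)
  have "\<And>x. ((\<lambda>x. u x * v x) has_real_derivative (\<lambda>x. deriv u x * v x + u x * deriv v x) x) (at x)"
    using Suc.prems by (auto intro!: derivative_eq_intros)
  moreover have "Cn n (\<lambda>x. deriv u x * v x + u x * deriv v x)"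
    using Suc Cn_mono by (intro Cn_add) auto
  ultimately show ?case using Cn_SucI[of "\<lambda>x. u x * v x" "\<lambda>x. deriv u x * v x + u x * deriv v x"] by blast
qed

lemma Cn_cmult: "Cn n u \<Longrightarrow> Cn n (\<lambda>x. c * u x)"
  using Cn_mult[OF Cn_const] by blast

lemma Cn_diff: "Cn n u \<Longrightarrow> Cn n v \<Longrightarrow> Cn n (\<lambda>x. u x - v x)"
  using Cn_add[of n u "\<lambda>x. (-1) * v x"] Cn_cmult[of n v "-1"] by simp

lemma Cn_power: "Cn n u \<Longrightarrow> Cn n (\<lambda>x. u x ^ j)"
  by (induction j) (auto intro: Cn_mult Cn_const)

lemma Cn_affine: "Cn n u \<Longrightarrow> Cn n (\<lambda>x. u (a * x + b))"
proof (induction n arbitrary: u)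
  case 0 then show ?case by simp
next
  case (Suc n)
  have d: "\<And>y. (u has_real_derivative deriv u y) (at y)" using Suc.prems by simp
  have "\<And>x. ((\<lambda>x. u (a * x + b)) has_real_derivative (\<lambda>x. a * deriv u (a * x + b)) x) (at x)"
  proof -
    fix x
    have "((\<lambda>x. a * x + b) has_real_derivative a) (at x)"
      by (auto intro!: derivative_eq_intros)
    from DERIV_chain2[OF d this] show "?thesis x" by (simp add: mult.commute)
  qed
  moreover have "Cn n (\<lambda>x. a * deriv u (a * x + b))"
    using Suc by (intro Cn_cmult) auto
  ultimately show ?case using Cn_SucI[of "\<lambda>x. u (a * x + b)" "\<lambda>x. a * deriv u (a * x + b)"] by blast
qed

lemma Cn_sin_cos: "Cn n sin \<and> Cn n cos"
proof (induction n)
  case 0 then show ?case by simp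
next
  case (Suc n)
  have "Cn n (\<lambda>x. - sin x)" using Cn_cmult[of n sin "-1"] Suc by simp
  moreover have "\<And>x. (sin has_real_derivative cos x) (at x)" "\<And>x. (cos has_real_derivative (\<lambda>x. - sin x) x) (at x)"
    by (auto intro!: derivative_eq_intros)
  ultimately show ?case using Cn_SucI[of sin cos] Cn_SucI[of cos "\<lambda>x. - sin x"] Suc by blast
qed

lemma smooth_const: "smooth (\<lambda>x. c)" by (simp add: smooth_def Cn_const)
lemma smooth_add: "smooth u \<Longrightarrow> smooth v \<Longrightarrow> smooth (\<lambda>x. u x + v x)" by (simp add: smooth_def Cn_add)
lemma smooth_diff: "smooth u \<Longrightarrow> smooth v \<Longrightarrow> smooth (\<lambda>x. u x - v x)" by (simp add: smooth_def Cn_diff)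
lemma smooth_mult: "smooth u \<Longrightarrow> smooth v \<Longrightarrow> smooth (\<lambda>x. u x * v x)" by (simp add: smooth_def Cn_mult)
lemma smooth_cmult: "smooth u \<Longrightarrow> smooth (\<lambda>x. c * u x)" by (simp add: smooth_def Cn_cmult)
lemma smooth_power: "smooth u \<Longrightarrow> smooth (\<lambda>x. u x ^ j)" by (simp add: smooth_def Cn_power)
lemma smooth_affine: "smooth u \<Longrightarrow> smooth (\<lambda>x. u (a * x + b))" by (simp add: smooth_def Cn_affine)
lemma smooth_cos: "smooth cos" by (simp add: smooth_def Cn_sin_cos)
lemma smooth_cos_lin: "smooth (\<lambda>x. cos (a * x))"
  using smooth_affine[OF smooth_cos, of a 0] by simp

lemma smooth_deriv: "smooth u \<Longrightarrow> smooth (deriv u)"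
  unfolding smooth_def by (metis Cn.simps(2))

lemma smooth_has_deriv: "smooth u \<Longrightarrow> (u has_real_derivative deriv u x) (at x)"
  unfolding smooth_def by (metis Cn.simps(2))

lemma smooth_cont: "smooth u \<Longrightarrow> continuous_on S u"
  by (meson DERIV_isCont continuous_at_imp_continuous_on smooth_has_deriv)

lemma smooth_funpow: "smooth u \<Longrightarrow> smooth ((deriv ^^ n) u)"
  by (induction n) (auto intro: smooth_deriv)

lemma smoothI:
  assumes "\<And>x. (u has_real_derivative u' x) (at x)" "smooth u'"
  shows "smooth u"
  using assms Cn_SucI unfolding smooth_def by (metis Cn.simps(1) old.nat.exhaust)


definition prim :: "(real \<Rightarrow> real) \<Rightarrow> real \<Rightarrow> real" where
  "prim u t = integral {-1..t} u"

lemma prim_zero: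
  assumes "\<And>t. t \<le> 0 \<Longrightarrow> u t = 0" "t \<le> 0"
  shows "prim u t = 0"
proof -
  have "integral {-1..t} u = integral {-1..t} (\<lambda>_. 0::real)"
    using assms by (intro integral_cong) auto
  then show ?thesis by (simp add: prim_def)
qed

lemma prim_deriv:
  assumes c: "continuous_on UNIV u" and z: "\<And>t. t \<le> 0 \<Longrightarrow> u t = 0"
  shows "(prim u has_real_derivative u t) (at t)"
proof (cases "t > -1")
  case True
  have "((\<lambda>x. integral {-1..x} u) has_real_derivative u t) (at t within {-1..t+1})"
    by (rule integral_has_real_derivative) (use True c continuous_on_subset in auto)
  moreover have "at t within {-1..t+1} = at t" using True by (intro at_within_Icc_at) auto
  ultimately show ?thesis by (simp add: prim_def[abs_def])
next
  case False
  have "((\<lambda>_. 0) has_real_derivative 0) (at t)" by simp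
  then have "(prim u has_real_derivative 0) (at t)"
    by (rule has_field_derivative_transform_within_open[where S="{..<-1/2}"])
       (use False prim_zero[OF z] in auto)
  then show ?thesis using z False by simp
qed

lemma smooth_prim:
  assumes "smooth u" "\<And>t. t \<le> 0 \<Longrightarrow> u t = 0"
  shows "smooth (prim u)"
  by (rule smoothI[OF prim_deriv]) (use assms smooth_cont in auto)

lemma deriv_prim:
  assumes "smooth u" "\<And>t. t \<le> 0 \<Longrightarrow> u t = 0"
  shows "deriv (prim u) = u"
  by (rule deriv_eqI, rule prim_deriv) (use assms smooth_cont in auto)

lemma prim_right:
  assumes c: "continuous_on UNIV u" and z: "\<And>t. t \<ge> 1 \<Longrightarrow> u t = 0" and t: "t \<ge> 1"
  shows "prim u t = prim u 1"
proof -
  have "integral {-1..1} u + integral {1..t} u = integral {-1..t} u"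
    by (rule Henstock_Kurzweil_Integration.integral_combine) (use t integrable_continuous_real[OF continuous_on_subset[OF c subset_UNIV]] in auto)
  moreover have "integral {1..t} u = integral {1..t} (\<lambda>_. 0::real)"
    using z by (intro integral_cong) auto
  ultimately show ?thesis by (simp add: prim_def)
qed

lemma prim_lin:
  assumes "continuous_on UNIV u" "continuous_on UNIV v"
  shows "prim (\<lambda>x. a * u x + b * v x) t = a * prim u t + b * prim v t"
proof -
  have iu: "u integrable_on {-1..t}" "v integrable_on {-1..t}"
    using integrable_continuous_real[OF continuous_on_subset[OF assms(1) subset_UNIV]]
      integrable_continuous_real[OF continuous_on_subset[OF assms(2) subset_UNIV]] by auto
  have "integral {-1..t} (\<lambda>x. a * u x + b * v x) = integral {-1..t} (\<lambda>x. a * u x) + integral {-1..t} (\<lambda>x. b * v x)"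
    by (rule integral_add) (auto intro: integrable_on_mult_right iu)
  then show ?thesis unfolding prim_def by simp
qed

lemma prim_of_deriv:
  assumes "smooth u" "\<And>t. t \<le> 0 \<Longrightarrow> u t = 0"
  shows "prim (deriv u) t = u t"
proof (cases "t \<ge> -1")
  case True
  have "(deriv u has_integral (u t - u (-1))) {-1..t}"
    by (rule fundamental_theorem_of_calculus_interior_strong[where S="{}"])
       (use True smooth_cont[OF assms(1)] in \<open>auto simp: has_real_derivative_iff_has_vector_derivative[symmetric] intro!: smooth_has_deriv[OF assms(1)]\<close>)
  then show ?thesis using assms(2)[of "-1"] by (simp add: prim_def integral_unique)
next
  case False
  then show ?thesis using assms(2)[of t] by (simp add: prim_def)
qed

lemma prim_bound:
  assumes c: "continuous_on UNIV u" and b: "\<And>x. -1 \<le> x \<Longrightarrow> x \<le> t \<Longrightarrow> \<bar>u x\<bar> \<le> M" and t: "t \<le> 1"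
    and M: "M \<ge> 0"
  shows "\<bar>prim u t\<bar> \<le> 2 * M"
proof (cases "t \<ge> -1")
  case True
  have "norm (integral {-1..t} u) \<le> M * (t - -1)"
    by (rule integral_bound) (use True b continuous_on_subset[OF c subset_UNIV] in auto)
  also have "\<dots> \<le> M * 2" using t True M by (intro mult_left_mono) auto
  finally show ?thesis by (simp add: prim_def)
next
  case False then show ?thesis using M by (simp add: prim_def)
qed

definition Qf :: "real poly \<Rightarrow> real \<Rightarrow> real" where
  "Qf p t = (if 0 < t then poly p (1/t) * exp (- (1/t)) else 0)"

definition nxp :: "real poly \<Rightarrow> real poly" where
  "nxp p = [:0,0,1:] * (p - pderiv p)"

lemma poly_exp_lim: "((\<lambda>s. poly (q::real poly) s * exp (- s)) \<longlongrightarrow> 0) at_top"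
proof -
  have "((\<lambda>s. \<Sum>i\<le>degree q. coeff q i * (s ^ i / exp s)) \<longlongrightarrow> 0) at_top"
    by (intro tendsto_null_sum tendsto_mult_right_zero tendsto_power_div_exp_0)
  moreover have "(\<lambda>s. \<Sum>i\<le>degree q. coeff q i * (s ^ i / exp s)) = (\<lambda>s. poly q s * exp (- s))"
    by (simp add: poly_altdef exp_minus sum_distrib_right divide_inverse mult.assoc)
  ultimately show ?thesis by simp
qed

lemma Qf_deriv: "(Qf p has_real_derivative Qf (nxp p) t) (at t)"
proof -
  consider "t > 0" | "t < 0" | "t = 0" by linarith
  then show ?thesis
  proof cases
    case 1
    have "((\<lambda>t. poly p (1/t) * exp (- (1/t))) has_real_derivative
        poly (pderiv p) (1/t) * (- 1 / t^2) * exp (- (1/t)) + poly p (1/t) * (exp (- (1/t)) * (1/t^2))) (at t)"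
      using 1 by (auto intro!: derivative_eq_intros DERIV_chain2[OF poly_DERIV] simp: power2_eq_square field_simps)
    moreover have eq: "poly (pderiv p) (1/t) * (- 1 / t^2) * exp (- (1/t)) + poly p (1/t) * (exp (- (1/t)) * (1/t^2))
        = Qf (nxp p) t"
    proof -
      have "poly (nxp p) (1/t) = (1/t^2) * (poly p (1/t) - poly (pderiv p) (1/t))"
        by (simp add: nxp_def power2_eq_square)
      then have "Qf (nxp p) t = (1/t^2) * (poly p (1/t) - poly (pderiv p) (1/t)) * exp (- (1/t))"
        using 1 by (simp add: Qf_def)
      then show ?thesis by (simp add: algebra_simps)
    qed
    ultimately have d: "((\<lambda>t. poly p (1/t) * exp (- (1/t))) has_real_derivative Qf (nxp p) t) (at t)"
      by simp
    show ?thesis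
    proof (rule has_field_derivative_transform_within_open[OF d, where S="{0<..}"])
      show "\<And>x. x \<in> {0<..} \<Longrightarrow> poly p (1/x) * exp (- (1/x)) = Qf p x"
        by (simp add: Qf_def)
    qed (use 1 in auto)
  next
    case 2
    have "((\<lambda>_. 0) has_real_derivative 0) (at t)" by simp
    then have "(Qf p has_real_derivative 0) (at t)"
    proof (rule has_field_derivative_transform_within_open[where S="{..<0}"])
      show "\<And>x. x \<in> {..<0} \<Longrightarrow> 0 = Qf p x"
        by (simp add: Qf_def)
    qed (use 2 in auto)
    then show ?thesis using 2 by (simp add: Qf_def)
  next
    case 3
    have "((\<lambda>y. (Qf p y - Qf p 0) / (y - 0)) \<longlongrightarrow> 0) (at 0)"
    proof (rule filterlim_split_at_real)
      show "((\<lambda>y. (Qf p y - Qf p 0) / (y - 0)) \<longlongrightarrow> 0) (at_left 0)"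
      proof (rule Lim_transform_eventually[OF tendsto_const])
        show "\<forall>\<^sub>F x in at_left 0. 0 = (Qf p x - Qf p 0) / (x - 0)"
          by (rule eventually_at_leftI[of "-1"]) (auto simp: Qf_def)
      qed
    next
      have "((\<lambda>s. poly (pCons 0 p) s * exp (- s)) \<longlongrightarrow> 0) at_top" by (rule poly_exp_lim)
      from filterlim_compose[OF this filterlim_inverse_at_top_right]
      have "((\<lambda>y. poly (pCons 0 p) (inverse y) * exp (- inverse y)) \<longlongrightarrow> 0) (at_right 0)" .
      then show "((\<lambda>y. (Qf p y - Qf p 0) / (y - 0)) \<longlongrightarrow> 0) (at_right 0)"
      proof (rule Lim_transform_eventually)
        show "\<forall>\<^sub>F x in at_right 0. poly (pCons 0 p) (inverse x) * exp (- inverse x) = (Qf p x - Qf p 0) / (x - 0)"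
        proof (rule eventually_at_rightI[of _ 1])
          fix x :: real assume "x \<in> {0<..<1}"
          then have "x > 0" by simp
          then show "poly (pCons 0 p) (inverse x) * exp (- inverse x) = (Qf p x - Qf p 0) / (x - 0)"
            by (simp add: Qf_def inverse_eq_divide)
        qed simp
      qed
    qed
    then have "(Qf p has_real_derivative 0) (at 0)"
      by (simp add: has_field_derivative_iff)
    then show ?thesis using 3 by (simp add: Qf_def)
  qed
qed

lemma Cn_Qf: "Cn n (Qf p)"
proof (induction n arbitrary: p)
  case 0 then show ?case by simp
next
  case (Suc n)
  show ?case by (rule Cn_SucI[OF Qf_deriv Suc])
qed

definition Eb :: "real \<Rightarrow> real" where "Eb t = (if 0 < t then exp (- (1/t)) else 0)"

lemma smooth_Eb: "smooth Eb"
proof -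
  have "Eb = Qf 1" by (auto simp: Eb_def Qf_def fun_eq_iff)
  then show ?thesis unfolding smooth_def using Cn_Qf by metis
qed

definition bump :: "real \<Rightarrow> real" where "bump t = Eb t * Eb (1 - t)"

lemma smooth_bump: "smooth bump"
  unfolding bump_def
  using smooth_mult[OF smooth_Eb smooth_affine[OF smooth_Eb, of "-1" 1]] by simp

lemma bump_out: "t \<le> 0 \<or> t \<ge> 1 \<Longrightarrow> bump t = 0"
  by (auto simp: bump_def Eb_def)

lemma bump_pos: "0 < t \<Longrightarrow> t < 1 \<Longrightarrow> 0 < bump t"
  by (auto simp: bump_def Eb_def)

lemma bump_le1: "bump t \<le> 1"
proof -
  have "0 \<le> Eb s \<and> Eb s \<le> 1" for s by (auto simp: Eb_def)
  then show ?thesis unfolding bump_def by (meson mult_le_one)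
qed

lemma bump_ge0: "0 \<le> bump t"
  by (auto simp: bump_def Eb_def)


definition van :: "(real \<Rightarrow> real) \<Rightarrow> bool" where
  "van u \<longleftrightarrow> (\<forall>t. (t \<le> 0 \<or> 1 \<le> t) \<longrightarrow> u t = 0)"

lemma vanD: "van u \<Longrightarrow> t \<le> 0 \<or> 1 \<le> t \<Longrightarrow> u t = 0"
  unfolding van_def by blast

lemma vanD0: "van u \<Longrightarrow> t \<le> 0 \<Longrightarrow> u t = 0"
  by (simp add: van_def)

lemma deriv_van:
  assumes s: "smooth u" and v: "van u"
  shows "van (deriv u)"
proof -
  have cl: "closed {x \<in> UNIV. deriv u x = 0}"
    by (rule continuous_closed_preimage_constant) (use smooth_cont[OF smooth_deriv[OF s]] in auto)
  have loc: "deriv u t = 0" if "t < 0 \<or> 1 < t" for t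
  proof -
    have "((\<lambda>_. 0) has_real_derivative 0) (at t)" by simp
    then have "(u has_real_derivative 0) (at t)"
    proof (rule has_field_derivative_transform_within_open[where S="{..<0} \<union> {1<..}"])
      show "\<And>x. x \<in> {..<0} \<union> {1<..} \<Longrightarrow> 0 = u x" using v by (auto simp: van_def)
    qed (use that in auto)
    then show ?thesis using smooth_has_deriv[OF s, of t] DERIV_unique by blast
  qed
  have "closure {..<0::real} \<subseteq> {x \<in> UNIV. deriv u x = 0}"
    by (rule closure_minimal) (use loc cl in auto)
  moreover have "closure {(1::real)<..} \<subseteq> {x \<in> UNIV. deriv u x = 0}"
    by (rule closure_minimal) (use loc cl in auto)
  ultimately show ?thesis unfolding van_def by auto
qed

lemma van_prim:
  assumes "smooth u" "van u" "prim u 1 = 0"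
  shows "van (prim u)"
  unfolding van_def
proof (intro allI impI)
  fix t :: real assume "t \<le> 0 \<or> 1 \<le> t"
  then show "prim u t = 0"
  proof
    assume "t \<le> 0" then show ?thesis using prim_zero[of u t] assms vanD0 by blast
  next
    assume "1 \<le> t" then show ?thesis
      using prim_right[of u t] assms smooth_cont vanD by metis
  qed
qed

lemma prim_lin3:
  assumes "continuous_on UNIV v" "continuous_on UNIV u1" "continuous_on UNIV u2"
  shows "prim (\<lambda>t. v t - (a * u1 t + b * u2 t)) t = prim v t - (a * prim u1 t + b * prim u2 t)"
proof -
  have i: "v integrable_on {-1..t}" "u1 integrable_on {-1..t}" "u2 integrable_on {-1..t}"
    using integrable_continuous_real[OF continuous_on_subset[OF assms(1) subset_UNIV]]
      integrable_continuous_real[OF continuous_on_subset[OF assms(2) subset_UNIV]]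
      integrable_continuous_real[OF continuous_on_subset[OF assms(3) subset_UNIV]] by auto
  have i2: "(\<lambda>t. a * u1 t) integrable_on {-1..t}" "(\<lambda>t. b * u2 t) integrable_on {-1..t}"
    using i by (auto intro: integrable_on_mult_right)
  have "integral {-1..t} (\<lambda>t. v t - (a * u1 t + b * u2 t)) =
        integral {-1..t} v - integral {-1..t} (\<lambda>t. a * u1 t + b * u2 t)"
    by (rule integral_diff) (use i i2 integrable_add in auto)
  also have "integral {-1..t} (\<lambda>t. a * u1 t + b * u2 t) = integral {-1..t} (\<lambda>t. a * u1 t) + integral {-1..t} (\<lambda>t. b * u2 t)"
    by (rule integral_add) (use i2 in auto)
  finally show ?thesis by (simp add: prim_def)
qed

definition db :: "real \<Rightarrow> real" where "db = deriv bump"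
definition cb :: real where "cb = prim bump 1"

lemma van_bump: "van bump" by (simp add: van_def bump_out)
lemma smooth_db: "smooth db" by (simp add: db_def smooth_deriv smooth_bump)
lemma van_db: "van db" by (simp add: db_def deriv_van smooth_bump van_bump)
lemma prim_db: "prim db t = bump t"
  unfolding db_def by (rule prim_of_deriv[OF smooth_bump]) (use van_bump vanD0 in blast)

lemma cb_pos: "cb > 0"
proof -
  have c: "continuous_on {-1..1} bump" by (rule smooth_cont[OF smooth_bump])
  have ge: "cb \<ge> 0" unfolding cb_def prim_def
    by (rule integral_nonneg) (use integrable_continuous_real[OF c] bump_ge0 in auto)
  have "cb \<noteq> 0"
  proof
    assume "cb = 0"
    then have "(bump has_integral 0) (cbox (-1) 1)"
      using integrable_continuous_real[OF c] by (auto simp: cb_def prim_def has_integral_integral)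
    then have "bump (1/2) = 0"
      using has_integral_0_cbox_imp_0[of "-1" 1 bump "1/2"] c bump_ge0 by auto
    then show False using bump_pos[of "1/2"] by simp
  qed
  then show ?thesis using ge by simp
qed

definition alpha :: "(real \<Rightarrow> real) \<Rightarrow> real" where "alpha v = prim v 1 / cb"
definition beta :: "(real \<Rightarrow> real) \<Rightarrow> real" where
  "beta v = (prim (prim v) 1 - alpha v * prim (prim bump) 1) / cb"
definition Bf :: "(real \<Rightarrow> real) \<Rightarrow> real \<Rightarrow> real" where
  "Bf v t = alpha v * bump t + beta v * db t"
definition Wf :: "(real \<Rightarrow> real) \<Rightarrow> real \<Rightarrow> real" where
  "Wf v t = v t - (alpha v * bump t + beta v * db t)"
definition Af :: "(real \<Rightarrow> real) \<Rightarrow> real \<Rightarrow> real" where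
  "Af v = prim (prim (Wf v))"

lemma smooth_Bf: "smooth (Bf v)"
  unfolding Bf_def[abs_def] by (intro smooth_add smooth_cmult smooth_bump smooth_db)

lemma van_Bf: "van (Bf v)"
  using van_bump van_db by (simp add: van_def Bf_def)

lemma smooth_Wf: "smooth v \<Longrightarrow> smooth (Wf v)"
  unfolding Wf_def[abs_def] by (intro smooth_diff smooth_add smooth_cmult smooth_bump smooth_db)

lemma van_Wf: "van v \<Longrightarrow> van (Wf v)"
  using van_bump van_db by (simp add: van_def Wf_def)

lemma v_split: "v t = Wf v t + Bf v t"
  by (simp add: Wf_def Bf_def)

lemma cont_prim: "smooth u \<Longrightarrow> van u \<Longrightarrow> continuous_on UNIV (prim u)"
  using smooth_cont smooth_prim vanD0 by blast

lemma prim_Wf: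
  assumes "smooth v"
  shows "prim (Wf v) t = prim v t - (alpha v * prim bump t + beta v * prim db t)"
  unfolding Wf_def
  by (rule prim_lin3) (use assms smooth_cont smooth_bump smooth_db in auto)

lemma prim_Wf_1:
  assumes "smooth v"
  shows "prim (Wf v) 1 = 0"
  using prim_Wf[OF assms, of 1] cb_pos van_bump
  by (simp add: prim_db alpha_def cb_def vanD)

lemma prim_prim_Wf:
  assumes "smooth v" "van v"
  shows "prim (prim (Wf v)) t = prim (prim v) t - (alpha v * prim (prim bump) t + beta v * prim (prim db) t)"
proof -
  have "prim (Wf v) = (\<lambda>t. prim v t - (alpha v * prim bump t + beta v * prim db t))"
    using prim_Wf[OF assms(1)] by auto
  then show ?thesis
    by (simp only:) (rule prim_lin3, use assms cont_prim smooth_bump van_bump smooth_db van_db in auto)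
qed

lemma prim_prim_Wf_1:
  assumes "smooth v" "van v"
  shows "prim (prim (Wf v)) 1 = 0"
proof -
  have "prim db = bump" using prim_db by auto
  then have "prim (prim db) 1 = cb" by (simp add: cb_def)
  then show ?thesis using prim_prim_Wf[OF assms, of 1] cb_pos
    by (simp add: beta_def)
qed

lemma smooth_prim_Wf: "smooth v \<Longrightarrow> van v \<Longrightarrow> smooth (prim (Wf v))"
  using smooth_prim smooth_Wf van_Wf vanD0 by blast

lemma van_prim_Wf: "smooth v \<Longrightarrow> van v \<Longrightarrow> van (prim (Wf v))"
  using van_prim smooth_Wf van_Wf prim_Wf_1 by blast

lemma smooth_Af: "smooth v \<Longrightarrow> van v \<Longrightarrow> smooth (Af v)"
  unfolding Af_def using smooth_prim smooth_prim_Wf van_prim_Wf vanD0 by blast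

lemma van_Af: "smooth v \<Longrightarrow> van v \<Longrightarrow> van (Af v)"
  unfolding Af_def using van_prim smooth_prim_Wf van_prim_Wf prim_prim_Wf_1 by blast

lemma deriv2_Af: "smooth v \<Longrightarrow> van v \<Longrightarrow> deriv (deriv (Af v)) = Wf v"
  unfolding Af_def
  using deriv_prim smooth_prim_Wf van_prim_Wf vanD0 smooth_Wf van_Wf by metis


definition rho :: "nat \<Rightarrow> real \<Rightarrow> real" where "rho j t = (1 - bump t) ^ j"
definition vj :: "int \<Rightarrow> nat \<Rightarrow> real \<Rightarrow> real" where
  "vj k j t = (1 - rho j t) * cos (pi * of_int k * t)"
definition psi :: "int \<Rightarrow> real \<Rightarrow> real" where
  "psi k t = (if 0 < t \<and> t < 1 then cos (pi * of_int k * t) else 0)"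

lemma smooth_rho: "smooth (rho j)"
  unfolding rho_def[abs_def] by (intro smooth_power smooth_diff smooth_const smooth_bump)

lemma smooth_vj: "smooth (vj k j)"
  unfolding vj_def[abs_def]
  by (intro smooth_mult smooth_diff smooth_const smooth_rho smooth_cos_lin)

lemma van_vj: "van (vj k j)"
  by (auto simp: van_def vj_def rho_def bump_out)

lemma rho_bounds: "0 \<le> rho j t" "rho j t \<le> 1"
  using bump_ge0[of t] bump_le1[of t] by (auto simp: rho_def power_le_one)

lemma vj_bound: "\<bar>vj k j t\<bar> \<le> 1"
proof -
  have "\<bar>1 - rho j t\<bar> \<le> 1" using rho_bounds[of j t] by auto
  moreover have "\<bar>cos (pi * of_int k * t)\<bar> \<le> 1" by simp
  ultimately show ?thesis unfolding vj_def abs_mult by (meson abs_ge_zero mult_le_one)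
qed

lemma vj_lim: "(\<lambda>j. vj k j t) \<longlonglongrightarrow> psi k t"
proof (cases "0 < t \<and> t < 1")
  case True
  have n: "norm (1 - bump t) < 1" using bump_pos[of t] bump_le1[of t] True by auto
  have "(\<lambda>j. (1 - bump t) ^ j) \<longlonglongrightarrow> 0" using LIMSEQ_power_zero[OF n] by simp
  then have "(\<lambda>j. (1 - rho j t) * cos (pi * of_int k * t)) \<longlonglongrightarrow> (1 - 0) * cos (pi * of_int k * t)"
    unfolding rho_def by (intro tendsto_mult[OF tendsto_diff[OF tendsto_const] tendsto_const])
  then show ?thesis using True by (simp add: vj_def psi_def)
next
  case False
  then have "vj k j t = 0" for j using van_vj[of k j] by (auto simp: van_def)
  then show ?thesis using False by (auto simp: psi_def)
qed


definition Dj :: "nat \<Rightarrow> real" where "Dj j = integral {0..1} (rho j)"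

lemma cont_rho: "continuous_on S (rho j)" using smooth_cont smooth_rho by blast

lemma Dj_lim: "Dj \<longlonglongrightarrow> 0"
proof -
  define g where "g = (\<lambda>s::real. if 0 < s \<and> s < 1 then 0 else 1::real)"
  have i1: "\<And>j. rho j integrable_on {0..1}" using integrable_continuous_real[OF cont_rho] by blast
  have i2: "(\<lambda>_::real. 1::real) integrable_on {0..1}" by (rule integrable_continuous_real) simp
  have b: "\<And>j x. x \<in> {0..1} \<Longrightarrow> norm (rho j x) \<le> 1" using rho_bounds by simp
  have c: "(\<lambda>j. rho j x) \<longlonglongrightarrow> g x" if "x \<in> {0..1}" for x
  proof (cases "0 < x \<and> x < 1")
    case True
    have n: "norm (1 - bump x) < 1" using bump_pos[of x] bump_le1[of x] True by auto
    have "(\<lambda>j. (1 - bump x) ^ j) \<longlonglongrightarrow> 0" using LIMSEQ_power_zero[OF n] by simp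
    then show ?thesis using True by (simp add: rho_def g_def)
  next
    case False
    then have "bump x = 0" using bump_out by (metis not_le)
    then have "rho j x = 1" for j by (simp add: rho_def)
    then show ?thesis using False by (auto simp: g_def)
  qed
  have lim: "(\<lambda>j. integral {0..1} (rho j)) \<longlonglongrightarrow> integral {0..1} g"
    by (rule dominated_convergence(2)[OF i1 i2 b c])
  have "(g has_integral 0) {0..1}"
  proof (rule has_integral_spike_finite[where S="{0,1}" and f="\<lambda>_. 0"])
    show "\<And>x. x \<in> {0..1} - {0, 1} \<Longrightarrow> g x = 0" by (auto simp: g_def)
  qed auto
  then show ?thesis using lim unfolding Dj_def by (simp add: integral_unique)
qed

lemma Dj_ge0: "Dj j \<ge> 0"
  unfolding Dj_def by (rule integral_nonneg) (use integrable_continuous_real[OF cont_rho] rho_bounds in auto)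


definition Fk :: "int \<Rightarrow> real \<Rightarrow> real" where
  "Fk k t = (if k = 0 then t else sin (pi * of_int k * t) / (pi * of_int k))"
definition Gk :: "int \<Rightarrow> real \<Rightarrow> real" where
  "Gk k t = (if k = 0 then t\<^sup>2 / 2 else (1 - cos (pi * of_int k * t)) / (pi * of_int k)\<^sup>2)"

lemma Fk_deriv: "(Fk k has_real_derivative cos (pi * of_int k * t)) (at t)"
proof (cases "k = 0")
  case True then show ?thesis unfolding Fk_def[abs_def] by (auto intro!: derivative_eq_intros)
next
  case False
  then have "pi * of_int k \<noteq> 0" by simp
  then show ?thesis using False unfolding Fk_def[abs_def]
    by (auto intro!: derivative_eq_intros simp: field_simps)
qed

lemma Gk_deriv: "(Gk k has_real_derivative Fk k t) (at t)"
proof (cases "k = 0")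
  case True then show ?thesis unfolding Gk_def[abs_def] Fk_def by (auto intro!: derivative_eq_intros)
next
  case False
  then have "pi * of_int k \<noteq> 0" by simp
  then show ?thesis using False unfolding Gk_def[abs_def] Fk_def
    by (auto intro!: derivative_eq_intros simp: field_simps power2_eq_square)
qed

lemma cont_Fk: "continuous_on S (Fk k)"
  using Fk_deriv DERIV_isCont continuous_at_imp_continuous_on by blast

lemma int_cos: "integral {0..t} (\<lambda>s. cos (pi * of_int k * s)) = Fk k t" if "t \<ge> 0" for t
proof -
  have "((\<lambda>s. cos (pi * of_int k * s)) has_integral (Fk k t - Fk k 0)) {0..t}"
    by (rule fundamental_theorem_of_calculus_interior_strong[where S="{}"])
       (use that cont_Fk Fk_deriv in \<open>auto simp: has_real_derivative_iff_has_vector_derivative[symmetric]\<close>)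
  then show ?thesis by (simp add: integral_unique Fk_def)
qed

lemma int_Fk: "integral {0..t} (Fk k) = Gk k t" if "t \<ge> 0" for t
proof -
  have c: "continuous_on {0..t} (Gk k)"
    using Gk_deriv DERIV_isCont continuous_at_imp_continuous_on by blast
  have "(Fk k has_integral (Gk k t - Gk k 0)) {0..t}"
    by (rule fundamental_theorem_of_calculus_interior_strong[where S="{}"])
       (use that c Gk_deriv in \<open>auto simp: has_real_derivative_iff_has_vector_derivative[symmetric]\<close>)
  then show ?thesis by (simp add: integral_unique Gk_def)
qed

lemma integral_zero_on: "(\<And>x. x \<in> S \<Longrightarrow> u x = 0) \<Longrightarrow> integral S u = 0"
  by (metis integral_cong integral_0)

lemma prim_from0:
  assumes "continuous_on UNIV u" "\<And>s. s \<le> 0 \<Longrightarrow> u s = 0" "t \<ge> 0"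
  shows "prim u t = integral {0..t} u"
proof -
  have "integral {-1..0} u + integral {0..t} u = integral {-1..t} u"
    by (rule Henstock_Kurzweil_Integration.integral_combine)
       (use assms integrable_continuous_real[OF continuous_on_subset[OF assms(1) subset_UNIV]] in auto)
  moreover have "integral {-1..0} u = 0"
    by (rule integral_zero_on) (use assms in auto)
  ultimately show ?thesis by (simp add: prim_def)
qed


lemma P1_approx:
  assumes t: "0 \<le> t" "t \<le> 1"
  shows "\<bar>prim (vj k j) t - Fk k t\<bar> \<le> Dj j"
proof -
  have cv: "continuous_on UNIV (vj k j)" using smooth_cont smooth_vj by blast
  have cc: "continuous_on S (\<lambda>s. cos (pi * of_int k * s))" for S
    by (intro continuous_intros)
  have cr: "continuous_on S (\<lambda>s. rho j s * cos (pi * of_int k * s))" for S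
    by (intro continuous_intros cont_rho)
  have "prim (vj k j) t = integral {0..t} (vj k j)"
    by (rule prim_from0[OF cv]) (use van_vj t in \<open>auto simp: van_def\<close>)
  also have "\<dots> = integral {0..t} (\<lambda>s. cos (pi * of_int k * s)) - integral {0..t} (\<lambda>s. rho j s * cos (pi * of_int k * s))"
    unfolding vj_def left_diff_distrib mult_1
    by (rule integral_diff) (use integrable_continuous_real[OF cc] integrable_continuous_real[OF cr] in auto)
  finally have eq: "prim (vj k j) t - Fk k t = - integral {0..t} (\<lambda>s. rho j s * cos (pi * of_int k * s))"
    using int_cos[OF t(1)] by simp
  have "norm (integral {0..t} (\<lambda>s. rho j s * cos (pi * of_int k * s))) \<le> integral {0..t} (rho j)"
  proof (rule integral_norm_bound_integral)
    show "(\<lambda>s. rho j s * cos (pi * of_int k * s)) integrable_on {0..t}" using integrable_continuous_real[OF cr] by blast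
    show "rho j integrable_on {0..t}" using integrable_continuous_real[OF cont_rho] by blast
    fix x show "norm (rho j x * cos (pi * of_int k * x)) \<le> rho j x"
      using rho_bounds[of j x] by (auto simp: abs_mult intro: mult_left_le)
  qed
  also have "\<dots> \<le> Dj j"
  proof -
    have "integral {0..t} (rho j) + integral {t..1} (rho j) = integral {0..1} (rho j)"
      by (rule Henstock_Kurzweil_Integration.integral_combine) (use t integrable_continuous_real[OF cont_rho] in auto)
    moreover have "integral {t..1} (rho j) \<ge> 0"
      by (rule integral_nonneg) (use integrable_continuous_real[OF cont_rho] rho_bounds in auto)
    ultimately show ?thesis by (simp add: Dj_def)
  qed
  finally show ?thesis using eq by simp
qed

lemma P2_approx:
  assumes t: "0 \<le> t" "t \<le> 1"
  shows "\<bar>prim (prim (vj k j)) t - Gk k t\<bar> \<le> Dj j"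
proof -
  have cp: "continuous_on UNIV (prim (vj k j))" using cont_prim smooth_vj van_vj by blast
  have "prim (prim (vj k j)) t = integral {0..t} (prim (vj k j))"
    by (rule prim_from0[OF cp]) (use prim_zero van_vj vanD0 t in blast)+
  then have "prim (prim (vj k j)) t - Gk k t = integral {0..t} (\<lambda>s. prim (vj k j) s - Fk k s)"
    using int_Fk[OF t(1)] integral_diff[of "prim (vj k j)" "{0..t}" "Fk k"]
      integrable_continuous_real[OF continuous_on_subset[OF cp subset_UNIV]] integrable_continuous_real[OF cont_Fk]
    by simp
  moreover have "norm (integral {0..t} (\<lambda>s. prim (vj k j) s - Fk k s)) \<le> Dj j * (t - 0)"
  proof (rule integral_bound)
    show "continuous_on {0..t} (\<lambda>s. prim (vj k j) s - Fk k s)"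
      by (intro continuous_intros continuous_on_subset[OF cp subset_UNIV] cont_Fk)
    fix s assume "s \<in> {0..t}"
    then show "norm (prim (vj k j) s - Fk k s) \<le> Dj j" using P1_approx[of s k j] t by auto
  qed (use t in auto)
  moreover have "Dj j * (t - 0) \<le> Dj j" using t Dj_ge0[of j] by (simp add: mult_left_le)
  ultimately show ?thesis by simp
qed


definition kap :: "int \<Rightarrow> real" where "kap k = 8 / (1 + \<bar>of_int k\<bar>)\<^sup>2"

lemma kap_pos: "kap k > 0"
  unfolding kap_def by (simp add: add_pos_nonneg)

lemma sq_le_4: "k \<noteq> 0 \<Longrightarrow> (1 + \<bar>real_of_int k\<bar>)\<^sup>2 \<le> 4 * (real_of_int k)\<^sup>2"
proof -
  assume "k \<noteq> 0"
  then have "1 \<le> \<bar>real_of_int k\<bar>" by linarith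
  then have "1 + \<bar>real_of_int k\<bar> \<le> 2 * \<bar>real_of_int k\<bar>" by simp
  then have "(1 + \<bar>real_of_int k\<bar>)\<^sup>2 \<le> (2 * \<bar>real_of_int k\<bar>)\<^sup>2"
    by (intro power_mono) auto
  then show ?thesis by (simp add: power_mult_distrib)
qed

lemma Gk_bound: "0 \<le> t \<Longrightarrow> t \<le> 1 \<Longrightarrow> \<bar>Gk k t\<bar> \<le> kap k"
proof (cases "k = 0")
  case True
  assume t: "0 \<le> t" "t \<le> 1"
  then have "t\<^sup>2 \<le> 1" by (simp add: power_le_one)
  then show ?thesis using True t by (simp add: Gk_def kap_def)
next
  case False
  assume t: "0 \<le> t" "t \<le> 1"
  have "1 \<le> \<bar>k\<bar>" using False by linarith
  then have a: "1 \<le> \<bar>real_of_int k\<bar>" by (metis of_int_1_le_iff of_int_abs)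
  have k2: "(real_of_int k)\<^sup>2 \<ge> 1" using power_mono[OF a, of 2] by simp
  define y where "y = pi * of_int k * t"
  have c: "\<bar>1 - cos y\<bar> \<le> 2" using cos_ge_minus_one[of y] cos_le_one[of y] by (simp add: abs_le_iff)
  have "pi\<^sup>2 \<ge> 1" using pi_gt3 by (simp add: one_le_power)
  then have "1 * (real_of_int k)\<^sup>2 \<le> pi\<^sup>2 * (real_of_int k)\<^sup>2"
    by (intro mult_right_mono) auto
  then have pk: "(real_of_int k)\<^sup>2 \<le> (pi * of_int k)\<^sup>2" by (simp add: power_mult_distrib)
  have "\<bar>Gk k t\<bar> = \<bar>1 - cos y\<bar> / (pi * of_int k)\<^sup>2" using False by (simp add: Gk_def y_def)
  also have "\<dots> \<le> 2 / (real_of_int k)\<^sup>2"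
    by (rule frac_le) (use c pk k2 in auto)
  also have "\<dots> = 8 / (4 * (real_of_int k)\<^sup>2)" by simp
  also have "\<dots> \<le> 8 / (1 + \<bar>real_of_int k\<bar>)\<^sup>2"
    by (rule frac_le) (use sq_le_4[OF False] in auto)
  finally show ?thesis by (simp add: kap_def)
qed

lemma Fk1_bound: "\<bar>Fk k 1\<bar> \<le> kap k"
  by (cases "k = 0") (auto simp: Fk_def kap_def sin_npi_int)


lemma db_bounded: "\<exists>M\<ge>0. \<forall>t. \<bar>db t\<bar> \<le> M"
proof -
  have "compact (db ` {0..1})"
    by (rule compact_continuous_image) (use smooth_cont smooth_db in auto)
  then obtain M where M: "\<And>x. x \<in> db ` {0..1} \<Longrightarrow> norm x \<le> M"
    using compact_imp_bounded bounded_iff by metis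
  have M0: "M \<ge> 0" using M[of "db 0"] by auto
  have "\<bar>db t\<bar> \<le> M" for t
  proof (cases "0 \<le> t \<and> t \<le> 1")
    case True then show ?thesis using M[of "db t"] by auto
  next
    case False then show ?thesis using van_db M0 by (auto simp: van_def)
  qed
  then show ?thesis using M0 by blast
qed

lemma P1b_bound: "t \<le> 1 \<Longrightarrow> \<bar>prim bump t\<bar> \<le> 2"
proof -
  assume t: "t \<le> 1"
  have "\<bar>bump x\<bar> \<le> 1" for x using bump_le1[of x] bump_ge0[of x] by simp
  then show ?thesis using prim_bound[where u=bump and M=1 and t=t] smooth_cont[OF smooth_bump] t by simp
qed

lemma P2b_bound: "t \<le> 1 \<Longrightarrow> \<bar>prim (prim bump) t\<bar> \<le> 4"
  using prim_bound[where u="prim bump" and M=2 and t=t] cont_prim[OF smooth_bump van_bump] P1b_bound by simp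

lemma Af_expand:
  "Af (vj k j) t = prim (prim (vj k j)) t - (alpha (vj k j) * prim (prim bump) t + beta (vj k j) * prim bump t)"
proof -
  have "prim db = bump" using prim_db by auto
  then show ?thesis unfolding Af_def using prim_prim_Wf[OF smooth_vj van_vj] by simp
qed

lemma one_d_bound:
  "\<exists>K1>0. \<forall>k. \<forall>\<^sub>F j in sequentially.
     (\<forall>t. \<bar>Af (vj k j) t\<bar> \<le> K1 * kap k) \<and> (\<forall>t. \<bar>Bf (vj k j) t\<bar> \<le> K1 * kap k)"
proof -
  obtain Md where Md: "Md \<ge> 0" "\<And>t. \<bar>db t\<bar> \<le> Md" using db_bounded by blast
  have cb: "cb > 0" by (rule cb_pos)
  define KA where "KA = 2 + 8 / cb + 2 * (2 + 8 / cb) / cb"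
  define KB where "KB = 2 / cb + Md * (2 + 8 / cb) / cb"
  have KA: "KA > 0" unfolding KA_def using cb by (simp add: add_pos_nonneg)
  have KB: "KB \<ge> 0" unfolding KB_def using cb Md by simp
  have main: "\<forall>\<^sub>F j in sequentially.
     (\<forall>t. \<bar>Af (vj k j) t\<bar> \<le> (KA + KB) * kap k) \<and> (\<forall>t. \<bar>Bf (vj k j) t\<bar> \<le> (KA + KB) * kap k)" for k
  proof -
    define \<kappa> where "\<kappa> = kap k"
    have kp: "\<kappa> > 0" unfolding \<kappa>_def by (rule kap_pos)
    have ev: "\<forall>\<^sub>F j in sequentially. Dj j < \<kappa>" using order_tendstoD(2)[OF Dj_lim kp] .
    show ?thesis using ev
    proof eventually_elim
      case (elim j)
      define v where "v = vj k j"
      have D: "Dj j \<le> \<kappa>" using elim by simp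
      have P1: "\<bar>prim v 1\<bar> \<le> 2 * \<kappa>"
        using P1_approx[of 1 k j] Fk1_bound[of k] D by (simp add: v_def \<kappa>_def)
      have P2: "\<bar>prim (prim v) t\<bar> \<le> 2 * \<kappa>" if "0 \<le> t" "t \<le> 1" for t
        using P2_approx[OF that, of k j] Gk_bound[OF that, of k] D by (simp add: v_def \<kappa>_def)
      have al: "\<bar>alpha v\<bar> \<le> 2 * \<kappa> / cb"
        unfolding alpha_def using P1 cb by (simp add: abs_div divide_right_mono)
      have "\<bar>alpha v * prim (prim bump) 1\<bar> \<le> (2 * \<kappa> / cb) * 4"
        unfolding abs_mult by (rule mult_mono) (use al P2b_bound[of 1] in auto)
      then have "\<bar>prim (prim v) 1 - alpha v * prim (prim bump) 1\<bar> \<le> 2 * \<kappa> + (2 * \<kappa> / cb) * 4"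
        using P2[of 1] by linarith
      then have be: "\<bar>beta v\<bar> \<le> (2 * \<kappa> + (2 * \<kappa> / cb) * 4) / cb"
        unfolding beta_def using cb by (simp add: abs_div divide_right_mono)
      have Abound: "\<bar>Af v t\<bar> \<le> KA * \<kappa>" for t
      proof (cases "0 \<le> t \<and> t \<le> 1")
        case True
        have a1: "\<bar>alpha v * prim (prim bump) t\<bar> \<le> (2 * \<kappa> / cb) * 4"
          unfolding abs_mult by (rule mult_mono) (use al P2b_bound[of t] True in auto)
        have a2: "\<bar>beta v * prim bump t\<bar> \<le> ((2 * \<kappa> + (2 * \<kappa> / cb) * 4) / cb) * 2"
          unfolding abs_mult by (rule mult_mono) (use be P1b_bound[of t] True in auto)
        have "\<bar>Af v t\<bar> \<le> 2 * \<kappa> + (2 * \<kappa> / cb) * 4 + ((2 * \<kappa> + (2 * \<kappa> / cb) * 4) / cb) * 2"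
          using Af_expand[of k j t] P2[of t] True a1 a2 unfolding v_def by linarith
        also have "\<dots> = KA * \<kappa>" unfolding KA_def using cb by (simp add: field_simps)
        finally show ?thesis .
      next
        case False
        then have "Af v t = 0" using van_Af[OF smooth_vj van_vj] unfolding v_def van_def by auto
        then show ?thesis using KA kp by simp
      qed
      have Bbound: "\<bar>Bf v t\<bar> \<le> KB * \<kappa>" for t
      proof -
        have b1: "\<bar>alpha v * bump t\<bar> \<le> (2 * \<kappa> / cb) * 1"
          unfolding abs_mult by (rule mult_mono) (use al bump_le1[of t] bump_ge0[of t] in auto)
        have b2: "\<bar>beta v * db t\<bar> \<le> ((2 * \<kappa> + (2 * \<kappa> / cb) * 4) / cb) * Md"
          unfolding abs_mult by (rule mult_mono) (use be Md in auto)
        have "\<bar>Bf v t\<bar> \<le> (2 * \<kappa> / cb) * 1 + ((2 * \<kappa> + (2 * \<kappa> / cb) * 4) / cb) * Md"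
          using b1 b2 unfolding Bf_def by linarith
        also have "\<dots> = KB * \<kappa>" unfolding KB_def using cb by (simp add: field_simps)
        finally show ?thesis .
      qed
      have h1: "KA * \<kappa> \<le> (KA + KB) * \<kappa>" using KB kp by (intro mult_right_mono) auto
      have h2: "KB * \<kappa> \<le> (KA + KB) * \<kappa>" using KA kp by (intro mult_right_mono) auto
      show ?case
        using order_trans[OF Abound h1] order_trans[OF Bbound h2] unfolding v_def \<kappa>_def by blast
    qed
  qed
  show ?thesis using KA KB main by (intro exI[of _ "KA + KB"]) auto
qed


definition prodf :: "('n::finite \<Rightarrow> real \<Rightarrow> real) \<Rightarrow> real^'n \<Rightarrow> real" where
  "prodf w x = (\<Prod>i\<in>UNIV. w i (x $ i))"

lemma prodf_line:
  "prodf w (x + t *\<^sub>R axis i 1) = w i (x $ i + t) * (\<Prod>j\<in>UNIV - {i}. w j (x $ j))"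
proof -
  have "prodf w (x + t *\<^sub>R axis i 1) = (\<Prod>j\<in>UNIV. w j (x $ j + t * (if j = i then 1 else 0)))"
    by (simp add: prodf_def axis_def)
  also have "\<dots> = w i (x $ i + t) * (\<Prod>j\<in>UNIV - {i}. w j (x $ j + t * (if j = i then 1 else 0)))"
    by (subst prod.remove[of UNIV i]) auto
  also have "(\<Prod>j\<in>UNIV - {i}. w j (x $ j + t * (if j = i then 1 else 0))) = (\<Prod>j\<in>UNIV - {i}. w j (x $ j))"
    by (intro prod.cong) auto
  finally show ?thesis .
qed

lemma prodf_upd:
  "prodf (w(i := u)) x = u (x $ i) * (\<Prod>j\<in>UNIV - {i}. w j (x $ j))"
proof -
  have "prodf (w(i := u)) x = (w(i := u)) i (x $ i) * (\<Prod>j\<in>UNIV - {i}. (w(i := u)) j (x $ j))"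
    unfolding prodf_def by (subst prod.remove[of UNIV i]) auto
  also have "(\<Prod>j\<in>UNIV - {i}. (w(i := u)) j (x $ j)) = (\<Prod>j\<in>UNIV - {i}. w j (x $ j))"
    by (intro prod.cong) auto
  finally show ?thesis by (simp only: fun_upd_same)
qed

lemma prodf_has_partial:
  assumes "\<And>j. smooth (w j)"
  shows "((\<lambda>t. prodf w (x + t *\<^sub>R axis i 1)) has_real_derivative prodf (w(i := deriv (w i))) x) (at 0)"
proof -
  have h: "(w i has_real_derivative deriv (w i) (x $ i)) (at (0 + x $ i))"
    using smooth_has_deriv[OF assms] by simp
  have "((\<lambda>t. w i (t + x $ i)) has_real_derivative deriv (w i) (x $ i)) (at 0)"
    using DERIV_shift[THEN iffD1, OF h] .
  then have d: "((\<lambda>t. w i (x $ i + t)) has_real_derivative deriv (w i) (x $ i)) (at 0)"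
    by (simp add: add.commute)
  have "((\<lambda>t. w i (x $ i + t) * (\<Prod>j\<in>UNIV - {i}. w j (x $ j))) has_real_derivative
      deriv (w i) (x $ i) * (\<Prod>j\<in>UNIV - {i}. w j (x $ j))) (at 0)"
    by (rule DERIV_cmult_right[OF d])
  then show ?thesis by (simp add: prodf_line prodf_upd)
qed

lemma partial_prodf:
  assumes "\<And>j. smooth (w j)"
  shows "partial i (prodf w) = prodf (w(i := deriv (w i)))"
proof (rule ext)
  fix x
  show "partial i (prodf w) x = prodf (w(i := deriv (w i))) x"
    unfolding partial_def by (rule DERIV_imp_deriv[OF prodf_has_partial[where w=w and i=i and x=x, OF assms]])
qed

lemma iter_partial_prodf:
  assumes "\<And>i. smooth (w i)"
  shows "iter_partial is (prodf w) = prodf (\<lambda>i. (deriv ^^ count_list is i) (w i))"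
proof (induction "is")
  case Nil then show ?case by simp
next
  case (Cons i "is")
  let ?w = "\<lambda>j. (deriv ^^ count_list is j) (w j)"
  have s: "\<And>j. smooth (?w j)" using assms smooth_funpow by blast
  have "iter_partial (i # is) (prodf w) = partial i (prodf ?w)" using Cons by simp
  also have "\<dots> = prodf (?w(i := deriv (?w i)))" by (rule partial_prodf[OF s])
  also have "?w(i := deriv (?w i)) = (\<lambda>j. (deriv ^^ count_list (i # is) j) (w j))"
    by (auto simp: fun_eq_iff)
  finally show ?case .
qed

lemma cont_prodf:
  assumes "\<And>i. continuous_on UNIV (w i)"
  shows "continuous_on UNIV (prodf w)"
  unfolding prodf_def[abs_def]
proof (rule continuous_on_prod)
  fix i
  have "continuous_on UNIV (\<lambda>x::real^'a. x $ i)" by (intro continuous_intros)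
  then show "continuous_on UNIV (\<lambda>x::real^'a. w i (x $ i))"
    using continuous_on_compose2[OF assms[of i]] by blast
qed

lemma prodf_support:
  assumes "\<And>i t. w i t \<noteq> 0 \<Longrightarrow> a i \<le> t \<and> t \<le> b i"
  shows "compact (closure {x. prodf w x \<noteq> 0})"
proof -
  have "{x. prodf w x \<noteq> 0} \<subseteq> cbox (\<chi> i. a i) (\<chi> i. b i)"
    using assms by (auto simp: prodf_def mem_box_cart)
  then have "closure {x. prodf w x \<noteq> 0} \<subseteq> cbox (\<chi> i. a i) (\<chi> i. b i)"
    by (intro closure_minimal) auto
  then show ?thesis
    by (meson bounded_cbox bounded_subset closed_closure compact_eq_bounded_closed)
qed

lemma test_fun_prodf:
  assumes s: "\<And>i. smooth (w i)" and supp: "\<And>i t. w i t \<noteq> 0 \<Longrightarrow> a i \<le> t \<and> t \<le> b i"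
  shows "test_fun (prodf w)"
  unfolding test_fun_def
proof (intro conjI allI)
  show "compact (closure {x. prodf w x \<noteq> 0})" by (rule prodf_support[OF supp])
  fix "is"
  show "continuous_on UNIV (iter_partial is (prodf w))"
    unfolding iter_partial_prodf[OF s]
    by (rule cont_prodf) (use smooth_cont smooth_funpow s in blast)
  fix i x
  let ?w = "\<lambda>j. (deriv ^^ count_list is j) (w j)"
  have si: "\<And>j. smooth (?w j)" using s smooth_funpow by blast
  have "?w(i := deriv (?w i)) = (\<lambda>j. (deriv ^^ count_list (i # is) j) (w j))"
    by (auto simp: fun_eq_iff)
  then show "((\<lambda>t. iter_partial is (prodf w) (x + t *\<^sub>R axis i 1)) has_real_derivative
          iter_partial (i # is) (prodf w) x) (at 0)"
    using prodf_has_partial[where w="?w" and i=i and x=x, OF si] unfolding iter_partial_prodf[OF s] by simp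
qed

lemma count_concat_pairs:
  "count_list (concat (map (\<lambda>i. [i, i]) xs)) j = 2 * count_list xs j"
  by (induction xs) auto

lemma count_distinct:
  "distinct xs \<Longrightarrow> count_list xs j = (if j \<in> set xs then 1 else 0)"
  by (induction xs) auto

lemma mix_op_prodf:
  assumes s: "\<And>i. smooth (w i)"
  shows "mix_op e (prodf w) = prodf (\<lambda>i. if i \<in> e then deriv (deriv (w i)) else w i)"
proof -
  obtain xs where xs: "distinct xs" "set xs = e"
    using finite_distinct_list[of e] by auto
  define ys where "ys = (SOME xs. distinct xs \<and> set xs = e)"
  have ys: "distinct ys" "set ys = e" using someI[of "\<lambda>xs. distinct xs \<and> set xs = e", OF conjI[OF xs]]
    by (auto simp: ys_def)
  have "mix_op e (prodf w) = prodf (\<lambda>i. (deriv ^^ count_list (concat (map (\<lambda>i. [i, i]) ys)) i) (w i))"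
    unfolding mix_op_def ys_def[symmetric] by (rule iter_partial_prodf[OF s])
  also have "(\<lambda>i. (deriv ^^ count_list (concat (map (\<lambda>i. [i, i]) ys)) i) (w i)) =
      (\<lambda>i. if i \<in> e then deriv (deriv (w i)) else w i)"
    by (auto simp: fun_eq_iff count_concat_pairs count_distinct[OF ys(1)] ys(2) numeral_2_eq_2)
  finally show ?thesis .
qed


definition qbox :: "int^'n::finite \<Rightarrow> (real^'n) set" where
  "qbox m = box (\<chi> i. - of_int (m $ i)) (\<chi> i. 1 - of_int (m $ i))"

lemma mem_qbox: "x \<in> qbox m \<longleftrightarrow> (\<forall>i. 0 < x $ i + of_int (m $ i) \<and> x $ i + of_int (m $ i) < 1)"
proof -
  have e: "\<And>y a::real. (-a < y \<and> y < 1 - a) = (0 < y + a \<and> y + a < 1)" by linarith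
  show ?thesis by (simp only: qbox_def mem_box_cart vec_lambda_beta e)
qed

lemma measure_qbox: "measure lborel (qbox m) = 1"
  unfolding qbox_def measure_lborel_box_eq
  by (auto simp: Basis_vec_def inner_axis intro!: prod.neutral)

lemma emeasure_qbox: "emeasure lborel (qbox m) < \<infinity>"
  unfolding qbox_def by (rule emeasure_lborel_box_finite)

lemma sets_qbox[measurable]: "qbox m \<in> sets lborel"
  unfolding qbox_def by simp

lemma sets_qbox_borel[measurable]: "qbox m \<in> sets borel"
  unfolding qbox_def by simp

lemma integrable_ind_qbox: "integrable lborel (indicator (qbox m) :: real^'n::finite \<Rightarrow> real)"
  using emeasure_qbox sets_qbox by (rule integrable_real_indicator[rotated])

lemma qbox_unique: "x \<in> qbox m \<Longrightarrow> m = (\<chi> i. - \<lfloor>x $ i\<rfloor>)"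
proof -
  assume "x \<in> qbox m"
  then have h: "\<forall>i. 0 < x $ i + of_int (m $ i) \<and> x $ i + of_int (m $ i) < 1" by (simp add: mem_qbox)
  have f0: "\<lfloor>x $ i + of_int (m $ i)\<rfloor> = 0" for i
  proof (rule floor_unique)
    show "of_int 0 \<le> x $ i + of_int (m $ i)" using h by (simp add: less_imp_le)
    show "x $ i + of_int (m $ i) < of_int 0 + 1" using h by simp
  qed
  have f1: "\<lfloor>x $ i + of_int (m $ i)\<rfloor> = \<lfloor>x $ i\<rfloor> + m $ i" for i by simp
  have "\<forall>i. m $ i = - \<lfloor>x $ i\<rfloor>"
  proof
    fix i show "m $ i = - \<lfloor>x $ i\<rfloor>" using f0[of i] f1[of i] by linarith
  qed
  then show ?thesis by (simp add: vec_eq_iff)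
qed

lemma sum_ind_qbox: "finite F \<Longrightarrow> (\<Sum>m\<in>F. indicator (qbox m) x) \<le> (1::real)"
proof -
  assume F: "finite F"
  define m0 :: "int^'a" where "m0 = (\<chi> i. - \<lfloor>x $ i\<rfloor>)"
  have "(\<Sum>m\<in>F. indicator (qbox m) x :: real) = (\<Sum>m\<in>F. if m = m0 then indicator (qbox m0) x else 0)"
    by (intro sum.cong) (auto simp: indicator_def m0_def dest: qbox_unique)
  also have "\<dots> = (if m0 \<in> F then indicator (qbox m0) x else 0)" using F by (simp add: sum.delta)
  also have "\<dots> \<le> 1" by (auto simp: indicator_def)
  finally show ?thesis .
qed

lemma L2_meas: "L2 g \<Longrightarrow> g \<in> borel_measurable lborel" by (simp add: L2_def)
lemma L2_sq: "L2 g \<Longrightarrow> integrable lborel (\<lambda>x. (g x)\<^sup>2)" by (simp add: L2_def)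

lemma abs_le_sq1: "\<bar>a::real\<bar> \<le> a\<^sup>2 + 1"
proof (cases "\<bar>a\<bar> \<le> 1")
  case True
  have "0 \<le> a\<^sup>2" by simp
  then show ?thesis using True by linarith
next
  case False
  then have "\<bar>a\<bar> * 1 \<le> \<bar>a\<bar> * \<bar>a\<bar>" by (intro mult_left_mono) auto
  then have "\<bar>a\<bar> \<le> a\<^sup>2" by (simp add: power2_eq_square)
  then show ?thesis by linarith
qed

lemma loc_int:
  fixes f h :: "real^'n::finite \<Rightarrow> real"
  assumes f: "L2 f" and h: "h \<in> borel_measurable lborel" and S: "S \<in> sets lborel" "emeasure lborel S < \<infinity>"
    and b: "\<And>x. \<bar>h x\<bar> \<le> M * indicator S x" and M: "M \<ge> 0"
  shows "integrable lborel (\<lambda>x. f x * h x)"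
proof (rule Bochner_Integration.integrable_bound)
  show "integrable lborel (\<lambda>x. M * ((f x)\<^sup>2 + indicator S x))"
    using L2_sq[OF f] integrable_real_indicator[OF S] by (intro integrable_mult_right integrable_add) auto
  show "(\<lambda>x. f x * h x) \<in> borel_measurable lborel" using L2_meas[OF f] h by measurable
  show "AE x in lborel. norm (f x * h x) \<le> norm (M * ((f x)\<^sup>2 + indicator S x))"
  proof (intro AE_I2)
    fix x
    have "\<bar>f x * h x\<bar> \<le> \<bar>f x\<bar> * (M * indicator S x)"
      unfolding abs_mult by (rule mult_left_mono[OF b]) simp
    also have "\<dots> \<le> ((f x)\<^sup>2 + 1) * (M * indicator S x)"
      by (rule mult_right_mono[OF abs_le_sq1]) (use M in \<open>auto simp: indicator_def\<close>)
    also have "\<dots> \<le> M * ((f x)\<^sup>2 + indicator S x)"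
      using M by (auto simp: indicator_def algebra_simps)
    finally show "norm (f x * h x) \<le> norm (M * ((f x)\<^sup>2 + indicator S x))" using M by simp
  qed
qed

lemma int_sq_ind: "L2 g \<Longrightarrow> integrable lborel (\<lambda>x. (g x)\<^sup>2 * indicator S x)"
  if "S \<in> sets lborel" for S
proof -
  assume g: "L2 g"
  show ?thesis
  proof (rule Bochner_Integration.integrable_bound[OF L2_sq[OF g]])
    show "(\<lambda>x. (g x)\<^sup>2 * indicator S x) \<in> borel_measurable lborel" using L2_meas[OF g] that by measurable
  qed (auto simp: indicator_def)
qed

lemma cs_cube:
  assumes g: "L2 g"
  shows "(\<integral>x. \<bar>g x\<bar> * indicator (qbox m) x \<partial>lborel)\<^sup>2 \<le> (\<integral>x. (g x)\<^sup>2 * indicator (qbox m) x \<partial>lborel)"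
proof -
  define a where "a = (\<integral>x. \<bar>g x\<bar> * indicator (qbox m) x \<partial>lborel)"
  define b where "b = (\<integral>x. (g x)\<^sup>2 * indicator (qbox m) x \<partial>lborel)"
  have i1: "integrable lborel (\<lambda>x. \<bar>g x\<bar> * indicator (qbox m) x)"
  proof -
    have "integrable lborel (\<lambda>x. g x * indicator (qbox m) x)"
      by (rule loc_int[OF g _ sets_qbox emeasure_qbox, where M=1]) (auto simp: indicator_def)
    from integrable_abs[OF this] show ?thesis by (simp add: abs_mult)
  qed
  have i2: "integrable lborel (\<lambda>x. (g x)\<^sup>2 * indicator (qbox m) x)" by (rule int_sq_ind[OF _ g]) simp
  have i3: "integrable lborel (indicator (qbox m) :: real^'a \<Rightarrow> real)" by (rule integrable_ind_qbox)
  have eq: "(\<lambda>x. (\<bar>g x\<bar> - a)\<^sup>2 * indicator (qbox m) x) =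
      (\<lambda>x. (g x)\<^sup>2 * indicator (qbox m) x - 2 * a * (\<bar>g x\<bar> * indicator (qbox m) x) + a\<^sup>2 * indicator (qbox m) x)"
    by (auto simp: fun_eq_iff indicator_def power2_eq_square algebra_simps)
  have "0 \<le> (\<integral>x. (\<bar>g x\<bar> - a)\<^sup>2 * indicator (qbox m) x \<partial>lborel)"
    by (rule Bochner_Integration.integral_nonneg) (auto simp: indicator_def)
  also have "\<dots> = b - 2 * a * a + a\<^sup>2 * measure lborel (qbox m)"
    unfolding eq using i1 i2 i3 by (simp add: a_def b_def)
  finally have "a\<^sup>2 \<le> b" by (simp add: measure_qbox power2_eq_square)
  then show ?thesis by (simp add: a_def b_def)
qed

lemma sum_cubes:
  assumes g: "L2 g" and F: "finite F"
  shows "(\<Sum>m\<in>F. \<integral>x. (g x)\<^sup>2 * indicator (qbox m) x \<partial>lborel) \<le> (\<integral>x. (g x)\<^sup>2 \<partial>lborel)"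
proof -
  have "(\<integral>x. (\<Sum>m\<in>F. (g x)\<^sup>2 * indicator (qbox m) x) \<partial>lborel) = (\<Sum>m\<in>F. \<integral>x. (g x)\<^sup>2 * indicator (qbox m) x \<partial>lborel)"
    by (rule Bochner_Integration.integral_sum) (rule int_sq_ind[OF _ g], simp)
  then have "(\<Sum>m\<in>F. \<integral>x. (g x)\<^sup>2 * indicator (qbox m) x \<partial>lborel) = (\<integral>x. (\<Sum>m\<in>F. (g x)\<^sup>2 * indicator (qbox m) x) \<partial>lborel)"
    by simp
  also have "\<dots> \<le> (\<integral>x. (g x)\<^sup>2 \<partial>lborel)"
  proof (rule integral_mono)
    show "integrable lborel (\<lambda>x. \<Sum>m\<in>F. (g x)\<^sup>2 * indicator (qbox m) x)"
      by (rule Bochner_Integration.integrable_sum) (rule int_sq_ind[OF _ g], simp)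
    show "integrable lborel (\<lambda>x. (g x)\<^sup>2)" by (rule L2_sq[OF g])
    fix x
    have "(\<Sum>m\<in>F. (g x)\<^sup>2 * indicator (qbox m) x) = (g x)\<^sup>2 * (\<Sum>m\<in>F. indicator (qbox m) x)"
      by (simp add: sum_distrib_left)
    also have "\<dots> \<le> (g x)\<^sup>2 * 1" by (rule mult_left_mono[OF sum_ind_qbox[OF F]]) simp
    finally show "(\<Sum>m\<in>F. (g x)\<^sup>2 * indicator (qbox m) x) \<le> (g x)\<^sup>2" by simp
  qed
  finally show ?thesis .
qed


definition sh :: "(real \<Rightarrow> real) \<Rightarrow> int \<Rightarrow> real \<Rightarrow> real" where
  "sh u c t = u (t + of_int c)"

lemma smooth_sh: "smooth u \<Longrightarrow> smooth (sh u c)"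
  using smooth_affine[of u 1 "of_int c"] by (simp add: sh_def[abs_def] add.commute)

lemma deriv_sh: "smooth u \<Longrightarrow> deriv (sh u c) = sh (deriv u) c"
proof (rule deriv_eqI)
  fix x assume "smooth u"
  have "(u has_real_derivative deriv u (x + of_int c)) (at (x + of_int c))" by (rule smooth_has_deriv) fact
  then show "(sh u c has_real_derivative sh (deriv u) c x) (at x)"
    unfolding sh_def[abs_def] using DERIV_shift by blast
qed

lemma van_bounded:
  assumes "continuous_on UNIV u" "van u"
  shows "\<exists>M\<ge>0. \<forall>t. \<bar>u t\<bar> \<le> M"
proof -
  have "compact (u ` {0..1})"
    by (rule compact_continuous_image) (use assms continuous_on_subset in auto)
  then obtain M where M: "\<And>x. x \<in> u ` {0..1} \<Longrightarrow> norm x \<le> M"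
    using compact_imp_bounded bounded_iff by metis
  have M0: "M \<ge> 0" using M[of "u 0"] by auto
  have "\<bar>u t\<bar> \<le> M" for t
  proof (cases "0 \<le> t \<and> t \<le> 1")
    case True then show ?thesis using M[of "u t"] by auto
  next
    case False then show ?thesis using assms(2) M0 by (auto simp: van_def)
  qed
  then show ?thesis using M0 by blast
qed

definition good :: "('n::finite \<Rightarrow> real \<Rightarrow> real) \<Rightarrow> int^'n \<Rightarrow> bool" where
  "good w m \<longleftrightarrow> (\<forall>i. continuous_on UNIV (w i) \<and>
      (\<forall>t. w i t \<noteq> 0 \<longrightarrow> 0 < t + of_int (m $ i) \<and> t + of_int (m $ i) < 1))"

lemma good_sh: "van u \<Longrightarrow> (\<forall>t. sh u c t \<noteq> 0 \<longrightarrow> 0 < t + of_int c \<and> t + of_int c < 1)"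
  unfolding sh_def by (meson not_le vanD)

lemma cont_sh: "continuous_on UNIV u \<Longrightarrow> continuous_on UNIV (sh u c)"
  unfolding sh_def[abs_def] by (rule continuous_on_compose2[of UNIV u]) (auto intro!: continuous_intros)

lemma prodf_bound:
  assumes c: "\<And>i t. \<bar>w i t\<bar> \<le> c i" and s: "\<And>i t. w i t \<noteq> 0 \<Longrightarrow> 0 < t + of_int (m $ i) \<and> t + of_int (m $ i) < 1"
  shows "\<bar>prodf w z\<bar> \<le> (\<Prod>i\<in>UNIV. c i) * indicator (qbox m) z"
proof (cases "z \<in> qbox m")
  case True
  have "\<bar>prodf w z\<bar> = (\<Prod>i\<in>UNIV. \<bar>w i (z $ i)\<bar>)" by (simp add: prodf_def abs_prod)
  also have "\<dots> \<le> (\<Prod>i\<in>UNIV. c i)" by (rule prod_mono) (use c in auto)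
  finally show ?thesis using True by simp
next
  case False
  then obtain i where "\<not> (0 < z $ i + of_int (m $ i) \<and> z $ i + of_int (m $ i) < 1)"
    by (auto simp: mem_qbox)
  then have "w i (z $ i) = 0" using s by blast
  then have "prodf w z = 0" unfolding prodf_def by (intro prod_zero) auto
  then show ?thesis using False by simp
qed

lemma good_meas: "good w m \<Longrightarrow> prodf w \<in> borel_measurable lborel"
  unfolding good_def using cont_prodf borel_measurable_continuous_onI by (simp add: measurable_lborel2) blast

lemma good_bounded:
  assumes "good w m"
  shows "\<exists>M\<ge>0. \<forall>z. \<bar>prodf w z\<bar> \<le> M * indicator (qbox m) z"
proof -
  have "\<exists>M\<ge>0. \<forall>t. \<bar>w i t\<bar> \<le> M" for i
  proof -
    have ci: "continuous_on {0 - of_int (m $ i)..1 - of_int (m $ i)} (w i)"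
      using assms continuous_on_subset unfolding good_def by blast
    have "compact (w i ` {0 - of_int (m $ i)..1 - of_int (m $ i)})"
      by (rule compact_continuous_image[OF ci]) simp
    then obtain M where M: "\<And>x. x \<in> w i ` {0 - of_int (m $ i)..1 - of_int (m $ i)} \<Longrightarrow> norm x \<le> M"
      using compact_imp_bounded bounded_iff by metis
    have M0: "M \<ge> 0" using M[of "w i (0 - of_int (m $ i))"] by auto
    have "\<bar>w i t\<bar> \<le> M" for t
    proof (cases "w i t = 0")
      case True then show ?thesis using M0 by simp
    next
      case False
      then have "0 < t + of_int (m $ i) \<and> t + of_int (m $ i) < 1" using assms unfolding good_def by blast
      then show ?thesis using M[of "w i t"] by auto
    qed
    then show ?thesis using M0 by blast
  qed
  then obtain c where c: "\<And>i. c i \<ge> 0" "\<And>i t. \<bar>w i t\<bar> \<le> c i" by metis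
  have "\<bar>prodf w z\<bar> \<le> (\<Prod>i\<in>UNIV. c i) * indicator (qbox m) z" for z
    by (rule prodf_bound[OF c(2)]) (use assms in \<open>auto simp: good_def\<close>)
  moreover have "(\<Prod>i\<in>UNIV. c i) \<ge> 0" using c by (simp add: prod_nonneg)
  ultimately show ?thesis by blast
qed

lemma good_int:
  assumes "L2 f" "good w m"
  shows "integrable lborel (\<lambda>x. f x * prodf w x)"
proof -
  obtain M where "M \<ge> 0" "\<And>z. \<bar>prodf w z\<bar> \<le> M * indicator (qbox m) z" using good_bounded[OF assms(2)] by blast
  then show ?thesis
    by (intro loc_int[OF assms(1) good_meas[OF assms(2)] sets_qbox emeasure_qbox]) auto
qed

definition gder :: "(real^'n::finite \<Rightarrow> real) \<Rightarrow> 'n set \<Rightarrow> real^'n \<Rightarrow> real" where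
  "gder f e = (SOME g. L2 g \<and> weak_mix_deriv e f g)"

lemma gder: "f \<in> H2mix \<Longrightarrow> L2 (gder f e) \<and> weak_mix_deriv e f (gder f e)"
proof -
  assume "f \<in> H2mix"
  then have "\<exists>g. L2 g \<and> weak_mix_deriv e f g" by (simp add: H2mix_def)
  then show ?thesis unfolding gder_def by (rule someI_ex)
qed

lemma H2mix_L2: "f \<in> H2mix \<Longrightarrow> L2 f" by (simp add: H2mix_def)


definition wPsi :: "int^'n::finite \<Rightarrow> int^'n \<Rightarrow> nat \<Rightarrow> 'n \<Rightarrow> real \<Rightarrow> real" where
  "wPsi k m j = (\<lambda>i. sh (vj (k $ i) j) (m $ i))"
definition wphi :: "int^'n::finite \<Rightarrow> int^'n \<Rightarrow> nat \<Rightarrow> 'n set \<Rightarrow> 'n \<Rightarrow> real \<Rightarrow> real" where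
  "wphi k m j e = (\<lambda>i. if i \<in> e then sh (Af (vj (k $ i) j)) (m $ i) else sh (Bf (vj (k $ i) j)) (m $ i))"
definition wmix :: "int^'n::finite \<Rightarrow> int^'n \<Rightarrow> nat \<Rightarrow> 'n set \<Rightarrow> 'n \<Rightarrow> real \<Rightarrow> real" where
  "wmix k m j e = (\<lambda>i. if i \<in> e then sh (Wf (vj (k $ i) j)) (m $ i) else sh (Bf (vj (k $ i) j)) (m $ i))"
definition wpsi0 :: "int^'n::finite \<Rightarrow> int^'n \<Rightarrow> 'n \<Rightarrow> real \<Rightarrow> real" where
  "wpsi0 k m = (\<lambda>i. sh (psi (k $ i)) (m $ i))"

lemma smooth_wphi: "smooth (wphi k m j e i)"
  unfolding wphi_def by (auto intro!: smooth_sh smooth_Af smooth_vj van_vj smooth_Bf)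

lemma van_support: "van u \<Longrightarrow> sh u c t \<noteq> 0 \<Longrightarrow> - of_int c \<le> t \<and> t \<le> 1 - of_int c"
  using good_sh[of u c] by force

lemma test_wphi: "test_fun (prodf (wphi k m j e))"
proof (rule test_fun_prodf[OF smooth_wphi])
  fix i t assume "wphi k m j e i t \<noteq> 0"
  then show "- of_int (m $ i) \<le> t \<and> t \<le> 1 - of_int (m $ i)"
  proof (cases "i \<in> e")
    case True
    with \<open>wphi k m j e i t \<noteq> 0\<close> have "sh (Af (vj (k $ i) j)) (m $ i) t \<noteq> 0" by (simp add: wphi_def)
    then show ?thesis by (rule van_support[OF van_Af[OF smooth_vj van_vj]])
  next
    case False
    with \<open>wphi k m j e i t \<noteq> 0\<close> have "sh (Bf (vj (k $ i) j)) (m $ i) t \<noteq> 0" by (simp add: wphi_def)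
    then show ?thesis by (rule van_support[OF van_Bf])
  qed
qed

lemma mix_wphi: "mix_op e (prodf (wphi k m j e)) = prodf (wmix k m j e)"
proof -
  have "mix_op e (prodf (wphi k m j e)) =
      prodf (\<lambda>i. if i \<in> e then deriv (deriv (wphi k m j e i)) else wphi k m j e i)"
    by (rule mix_op_prodf[OF smooth_wphi])
  also have "(\<lambda>i. if i \<in> e then deriv (deriv (wphi k m j e i)) else wphi k m j e i) = wmix k m j e"
  proof (rule ext)
    fix i
    show "(if i \<in> e then deriv (deriv (wphi k m j e i)) else wphi k m j e i) = wmix k m j e i"
    proof (cases "i \<in> e")
      case True
      let ?A = "Af (vj (k $ i) j)"
      have sA: "smooth ?A" by (rule smooth_Af[OF smooth_vj van_vj])
      have "deriv (deriv (sh ?A (m $ i))) = sh (deriv (deriv ?A)) (m $ i)"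
        using deriv_sh[OF sA] deriv_sh[OF smooth_deriv[OF sA]] by simp
      then show ?thesis using True deriv2_Af[OF smooth_vj van_vj] by (simp add: wphi_def wmix_def)
    next
      case False then show ?thesis by (simp add: wphi_def wmix_def)
    qed
  qed
  finally show ?thesis .
qed

lemma Psi_split: "prodf (wPsi k m j) z = (\<Sum>e\<in>Pow UNIV. prodf (wmix k m j e) z)"
proof -
  have "prodf (wPsi k m j) z = (\<Prod>i\<in>UNIV. sh (Wf (vj (k $ i) j)) (m $ i) (z $ i) + sh (Bf (vj (k $ i) j)) (m $ i) (z $ i))"
    unfolding prodf_def wPsi_def sh_def by (subst v_split) simp
  also have "\<dots> = (\<Sum>X\<in>Pow UNIV. (\<Prod>i\<in>X. sh (Wf (vj (k $ i) j)) (m $ i) (z $ i)) *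
                     (\<Prod>i\<in>UNIV - X. sh (Bf (vj (k $ i) j)) (m $ i) (z $ i)))"
    by (rule prod_add) simp
  also have "\<dots> = (\<Sum>e\<in>Pow UNIV. prodf (wmix k m j e) z)"
  proof (rule sum.cong[OF refl])
    fix e :: "'a set"
    have "prodf (wmix k m j e) z = (\<Prod>i\<in>UNIV \<inter> {i. i \<in> e}. sh (Wf (vj (k $ i) j)) (m $ i) (z $ i)) *
              (\<Prod>i\<in>UNIV \<inter> - {i. i \<in> e}. sh (Bf (vj (k $ i) j)) (m $ i) (z $ i))"
    proof -
      have "prodf (wmix k m j e) z = (\<Prod>i\<in>UNIV. if i \<in> e then sh (Wf (vj (k $ i) j)) (m $ i) (z $ i)
                 else sh (Bf (vj (k $ i) j)) (m $ i) (z $ i))"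
        unfolding prodf_def wmix_def by (intro prod.cong) auto
      then show ?thesis by (simp only: prod.If_cases[OF finite])
    qed
    moreover have "UNIV \<inter> {i. i \<in> e} = e" "UNIV \<inter> - {i. i \<in> e} = UNIV - e" by auto
    ultimately show "(\<Prod>i\<in>e. sh (Wf (vj (k $ i) j)) (m $ i) (z $ i)) *
                     (\<Prod>i\<in>UNIV - e. sh (Bf (vj (k $ i) j)) (m $ i) (z $ i)) = prodf (wmix k m j e) z"
      by simp
  qed
  finally show ?thesis .
qed

lemma good_wmix: "good (wmix k m j e) m"
  unfolding good_def wmix_def
  using good_sh[OF van_Wf[OF van_vj]] good_sh[OF van_Bf]
    cont_sh[OF smooth_cont[OF smooth_Wf[OF smooth_vj]]] cont_sh[OF smooth_cont[OF smooth_Bf]]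
  by auto

lemma good_wphi: "good (wphi k m j e) m"
  unfolding good_def wphi_def
  using good_sh[OF van_Af[OF smooth_vj van_vj]] good_sh[OF van_Bf]
    cont_sh[OF smooth_cont[OF smooth_Af[OF smooth_vj van_vj]]] cont_sh[OF smooth_cont[OF smooth_Bf]]
  by auto

lemma good_wPsi: "good (wPsi k m j) m"
  unfolding good_def wPsi_def
  using good_sh[OF van_vj] cont_sh[OF smooth_cont[OF smooth_vj]]
  by auto

lemma identity:
  assumes f: "f \<in> H2mix"
  shows "(\<integral>x. f x * prodf (wPsi k m j) x \<partial>lborel) = (\<Sum>e\<in>Pow UNIV. \<integral>x. gder f e x * prodf (wphi k m j e) x \<partial>lborel)"
proof -
  have "(\<integral>x. f x * prodf (wPsi k m j) x \<partial>lborel) = (\<integral>x. (\<Sum>e\<in>Pow UNIV. f x * prodf (wmix k m j e) x) \<partial>lborel)"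
    by (simp add: Psi_split sum_distrib_left)
  also have "\<dots> = (\<Sum>e\<in>Pow UNIV. \<integral>x. f x * prodf (wmix k m j e) x \<partial>lborel)"
    by (rule Bochner_Integration.integral_sum) (rule good_int[OF H2mix_L2[OF f] good_wmix])
  also have "\<dots> = (\<Sum>e\<in>Pow UNIV. \<integral>x. gder f e x * prodf (wphi k m j e) x \<partial>lborel)"
  proof (rule sum.cong[OF refl])
    fix e
    have "weak_mix_deriv e f (gder f e)" using gder[OF f] by blast
    then have "integral\<^sup>L lborel (\<lambda>x. f x * mix_op e (prodf (wphi k m j e)) x) =
               integral\<^sup>L lborel (\<lambda>x. gder f e x * prodf (wphi k m j e) x)"
      unfolding weak_mix_deriv_def using test_wphi by blast
    then show "(\<integral>x. f x * prodf (wmix k m j e) x \<partial>lborel) = (\<integral>x. gder f e x * prodf (wphi k m j e) x \<partial>lborel)"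
      by (simp add: mix_wphi)
  qed
  finally show ?thesis .
qed

lemma phi_bound:
  assumes K1: "\<forall>k. \<forall>\<^sub>F j in sequentially.
     (\<forall>t. \<bar>Af (vj k j) t\<bar> \<le> K1 * kap k) \<and> (\<forall>t. \<bar>Bf (vj k j) t\<bar> \<le> K1 * kap k)"
  shows "\<forall>\<^sub>F j in sequentially. \<forall>e z. \<bar>prodf (wphi k m j e) z\<bar> \<le> (\<Prod>i\<in>UNIV. K1 * kap (k $ i)) * indicator (qbox m) z"
proof -
  have "\<forall>\<^sub>F j in sequentially. \<forall>i. (\<forall>t. \<bar>Af (vj (k $ i) j) t\<bar> \<le> K1 * kap (k $ i)) \<and> (\<forall>t. \<bar>Bf (vj (k $ i) j) t\<bar> \<le> K1 * kap (k $ i))"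
    by (rule eventually_all_finite) (use K1 in blast)
  then show ?thesis
  proof eventually_elim
    case (elim j)
    show ?case
    proof (intro allI)
      fix e z
      show "\<bar>prodf (wphi k m j e) z\<bar> \<le> (\<Prod>i\<in>UNIV. K1 * kap (k $ i)) * indicator (qbox m) z"
      proof (rule prodf_bound)
        show "\<bar>wphi k m j e i t\<bar> \<le> K1 * kap (k $ i)" for i t
          using elim by (auto simp: wphi_def sh_def)
        show "wphi k m j e i t \<noteq> 0 \<Longrightarrow> 0 < t + of_int (m $ i) \<and> t + of_int (m $ i) < 1" for i t
          using good_wphi[of k m j e] unfolding good_def by blast
      qed
    qed
  qed
qed

lemma int_bound:
  assumes g: "L2 g" and gw: "good w m" and b: "\<And>z. \<bar>prodf w z\<bar> \<le> P * indicator (qbox m) z"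
  shows "\<bar>\<integral>x. g x * prodf w x \<partial>lborel\<bar> \<le> P * (\<integral>x. \<bar>g x\<bar> * indicator (qbox m) x \<partial>lborel)"
proof -
  have P: "P \<ge> 0"
  proof -
    obtain z :: "real^'a" where "z \<in> qbox m"
      using measure_qbox[of m] by (metis empty_iff measure_empty zero_neq_one equals0I)
    then show ?thesis using b[of z] by simp
  qed
  have ig: "integrable lborel (\<lambda>x. \<bar>g x\<bar> * indicator (qbox m) x)"
  proof -
    have "integrable lborel (\<lambda>x. g x * indicator (qbox m) x)"
      by (rule loc_int[OF g _ sets_qbox emeasure_qbox, where M=1]) (auto simp: indicator_def)
    from integrable_abs[OF this] show ?thesis by (simp add: abs_mult)
  qed
  have "\<bar>\<integral>x. g x * prodf w x \<partial>lborel\<bar> \<le> (\<integral>x. \<bar>g x * prodf w x\<bar> \<partial>lborel)"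
    by (rule integral_abs_bound)
  also have "\<dots> \<le> (\<integral>x. P * (\<bar>g x\<bar> * indicator (qbox m) x) \<partial>lborel)"
  proof (rule integral_mono)
    show "integrable lborel (\<lambda>x. \<bar>g x * prodf w x\<bar>)" using good_int[OF g gw] by (rule integrable_abs)
    show "integrable lborel (\<lambda>x. P * (\<bar>g x\<bar> * indicator (qbox m) x))" using ig by simp
    fix x
    have "\<bar>g x * prodf w x\<bar> \<le> \<bar>g x\<bar> * (P * indicator (qbox m) x)"
      unfolding abs_mult by (rule mult_left_mono[OF b]) simp
    then show "\<bar>g x * prodf w x\<bar> \<le> P * (\<bar>g x\<bar> * indicator (qbox m) x)" by (simp add: mult_ac)
  qed
  also have "\<dots> = P * (\<integral>x. \<bar>g x\<bar> * indicator (qbox m) x \<partial>lborel)" by simp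
  finally show ?thesis .
qed


lemma abs_ind_int:
  assumes g: "L2 g"
  shows "integrable lborel (\<lambda>x. \<bar>g x\<bar> * indicator (qbox m) x)"
proof -
  have "integrable lborel (\<lambda>x. g x * indicator (qbox m) x)"
    by (rule loc_int[OF g _ sets_qbox emeasure_qbox, where M=1]) (auto simp: indicator_def)
  from integrable_abs[OF this] show ?thesis by (simp add: abs_mult)
qed

lemma wPsi_bound:
  fixes k m :: "int^'n::finite"
  shows "\<bar>prodf (wPsi k m j) z\<bar> \<le> indicator (qbox m) z"
proof -
  have "\<bar>prodf (wPsi k m j) z\<bar> \<le> (\<Prod>i\<in>(UNIV::'n set). (\<lambda>_. 1::real) i) * indicator (qbox m) z"
  proof (rule prodf_bound[where c="\<lambda>_. 1"])
    show "\<bar>wPsi k m j i t\<bar> \<le> 1" for i t by (simp add: wPsi_def sh_def vj_bound)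
    show "wPsi k m j i t \<noteq> 0 \<Longrightarrow> 0 < t + of_int (m $ i) \<and> t + of_int (m $ i) < 1" for i t
      using good_wPsi[of k m j] unfolding good_def by blast
  qed
  then show ?thesis by simp
qed

lemma wPsi_lim: "(\<lambda>j. prodf (wPsi k m j) x) \<longlonglongrightarrow> prodf (wpsi0 k m) x"
  unfolding prodf_def wPsi_def wpsi0_def sh_def
  by (intro tendsto_prod vj_lim)

lemma lim_int:
  assumes f: "L2 f"
  shows "(\<lambda>j. \<integral>x. f x * prodf (wPsi k m j) x \<partial>lborel) \<longlonglongrightarrow> (\<integral>x. f x * prodf (wpsi0 k m) x \<partial>lborel)"
proof (rule integral_dominated_convergence[where w="\<lambda>x. \<bar>f x\<bar> * indicator (qbox m) x"])
  have sm: "(\<lambda>x. f x * prodf (wPsi k m j) x) \<in> borel_measurable lborel" for j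
    using L2_meas[OF f] good_meas[OF good_wPsi] by measurable
  then show "\<And>j. (\<lambda>x. f x * prodf (wPsi k m j) x) \<in> borel_measurable lborel" .
  have lim: "(\<lambda>j. f x * prodf (wPsi k m j) x) \<longlonglongrightarrow> f x * prodf (wpsi0 k m) x" for x
    by (intro tendsto_mult_left wPsi_lim)
  then show "AE x in lborel. (\<lambda>j. f x * prodf (wPsi k m j) x) \<longlonglongrightarrow> f x * prodf (wpsi0 k m) x"
    by simp
  show "(\<lambda>x. f x * prodf (wpsi0 k m) x) \<in> borel_measurable lborel"
    by (rule borel_measurable_LIMSEQ_real[OF lim sm])
  show "integrable lborel (\<lambda>x. \<bar>f x\<bar> * indicator (qbox m) x)" by (rule abs_ind_int[OF f])
  fix j
  show "AE x in lborel. norm (f x * prodf (wPsi k m j) x) \<le> \<bar>f x\<bar> * indicator (qbox m) x"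
  proof (intro AE_I2)
    fix x
    show "norm (f x * prodf (wPsi k m j) x) \<le> \<bar>f x\<bar> * indicator (qbox m) x"
      unfolding real_norm_def abs_mult by (rule mult_left_mono[OF wPsi_bound]) simp
  qed
qed

lemma core_bound:
  assumes K1: "\<forall>k. \<forall>\<^sub>F j in sequentially.
     (\<forall>t. \<bar>Af (vj k j) t\<bar> \<le> K1 * kap k) \<and> (\<forall>t. \<bar>Bf (vj k j) t\<bar> \<le> K1 * kap k)"
    and f: "f \<in> H2mix"
  shows "\<bar>\<integral>x. f x * prodf (wpsi0 k m) x \<partial>lborel\<bar> \<le>
     (\<Prod>i\<in>UNIV. K1 * kap (k $ i)) * (\<Sum>e\<in>Pow UNIV. \<integral>x. \<bar>gder f e x\<bar> * indicator (qbox m) x \<partial>lborel)"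
proof -
  define P where "P = (\<Prod>i\<in>UNIV. K1 * kap (k $ i))"
  define R where "R = P * (\<Sum>e\<in>Pow UNIV. \<integral>x. \<bar>gder f e x\<bar> * indicator (qbox m) x \<partial>lborel)"
  have ev: "\<forall>\<^sub>F j in sequentially. \<bar>\<integral>x. f x * prodf (wPsi k m j) x \<partial>lborel\<bar> \<le> R"
    using phi_bound[OF K1, of k m]
  proof eventually_elim
    case (elim j)
    have "\<bar>\<integral>x. f x * prodf (wPsi k m j) x \<partial>lborel\<bar> = \<bar>\<Sum>e\<in>Pow UNIV. \<integral>x. gder f e x * prodf (wphi k m j e) x \<partial>lborel\<bar>"
      by (simp add: identity[OF f])
    also have "\<dots> \<le> (\<Sum>e\<in>Pow UNIV. \<bar>\<integral>x. gder f e x * prodf (wphi k m j e) x \<partial>lborel\<bar>)"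
      by (rule sum_abs)
    also have "\<dots> \<le> (\<Sum>e\<in>Pow UNIV. P * (\<integral>x. \<bar>gder f e x\<bar> * indicator (qbox m) x \<partial>lborel))"
    proof (rule sum_mono)
      fix e
      show "\<bar>\<integral>x. gder f e x * prodf (wphi k m j e) x \<partial>lborel\<bar> \<le> P * (\<integral>x. \<bar>gder f e x\<bar> * indicator (qbox m) x \<partial>lborel)"
        by (rule int_bound[OF conjunct1[OF gder[OF f]] good_wphi]) (use elim in \<open>simp add: P_def\<close>)
    qed
    also have "\<dots> = R" by (simp add: R_def sum_distrib_left)
    finally show ?case .
  qed
  have lim: "(\<lambda>j. \<bar>\<integral>x. f x * prodf (wPsi k m j) x \<partial>lborel\<bar>) \<longlonglongrightarrow> \<bar>\<integral>x. f x * prodf (wpsi0 k m) x \<partial>lborel\<bar>"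
    by (intro tendsto_rabs lim_int H2mix_L2 f)
  have "\<bar>\<integral>x. f x * prodf (wpsi0 k m) x \<partial>lborel\<bar> \<le> R"
    by (rule tendsto_le[OF sequentially_bot tendsto_const lim ev])
  then show ?thesis by (simp add: R_def P_def)
qed


definition sg :: "'n set \<Rightarrow> 'n \<Rightarrow> real" where "sg J i = (if i \<in> J then 1 else -1)"
definition BoxJ :: "'n::finite set \<Rightarrow> (real^'n) set" where
  "BoxJ J = cbox (\<chi> i. if i \<in> J then 1/2 else 0) (\<chi> i. if i \<in> J then 1 else 1/2)"
definition TJ :: "int^'n::finite \<Rightarrow> 'n set \<Rightarrow> real^'n \<Rightarrow> real^'n" where
  "TJ m J x = (\<chi> i. 2 * sg J i * x $ i - sg J i - of_int (m $ i))"
definition Qc :: "int^'n::finite \<Rightarrow> (real^'n) set" where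
  "Qc m = cbox (\<chi> i. - of_int (m $ i)) (\<chi> i. 1 - of_int (m $ i))"

lemma sg_sq: "sg J i * sg J i = 1" by (simp add: sg_def)
lemma sg_nz: "sg J i \<noteq> 0" by (simp add: sg_def)

lemma abs_prod_mu: "\<bar>prod (\<lambda>i. 2 * sg J i) (UNIV :: 'n::finite set)\<bar> = 2 ^ CARD('n)"
proof -
  have "\<bar>prod (\<lambda>i. 2 * sg J i) (UNIV :: 'n set)\<bar> = prod (\<lambda>i. \<bar>2 * sg J i\<bar>) (UNIV :: 'n set)"
    by (simp add: abs_prod)
  also have "\<dots> = prod (\<lambda>i. 2) (UNIV :: 'n set)" by (intro prod.cong) (auto simp: sg_def)
  finally show ?thesis by simp
qed

lemma image_BoxJ:
  "(\<lambda>x. \<chi> k. x $ k / (2 * sg J k)) ` cbox (\<chi> i. sg J i) (\<chi> i. 1 + sg J i) = BoxJ (J :: 'n::finite set)"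
proof -
  have f: "(\<lambda>x::real^'n. \<chi> k. x $ k / (2 * sg J k)) = (\<lambda>x. \<chi> k. (1 / (2 * sg J k)) * x $ k)"
    by (rule ext) (simp add: vec_eq_iff)
  have ne: "cbox (\<chi> i. sg J i) (\<chi> i. 1 + sg J i) \<noteq> ({} :: (real^'n) set)"
    by (auto simp: interval_ne_empty_cart)
  have e1: "(\<chi> k. min (1 / (2 * sg J k) * sg J k) (1 / (2 * sg J k) * (1 + sg J k))) =
      (\<chi> i. (if i \<in> J then 1/2 else 0 :: real))"
    by (auto simp: vec_eq_iff sg_def)
  have e2: "(\<chi> k. max (1 / (2 * sg J k) * sg J k) (1 / (2 * sg J k) * (1 + sg J k))) =
      (\<chi> i. (if i \<in> J then 1 else 1/2 :: real))"
    by (auto simp: vec_eq_iff sg_def)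
  show ?thesis unfolding f image_stretch_interval_cart if_not_P[OF ne] vec_lambda_beta e1 e2 BoxJ_def by (rule refl)
qed

lemma piece:
  fixes G :: "real^'n::finite \<Rightarrow> 'b::banach"
  assumes G: "(G has_integral I) (Qc m)"
  shows "((\<lambda>x. G (TJ m J x)) has_integral (I /\<^sub>R 2 ^ CARD('n))) (BoxJ J)"
proof -
  define c :: "real^'n" where "c = (\<chi> i. - sg J i - of_int (m $ i))"
  have "((\<lambda>x. G (1 *\<^sub>R x + c)) has_integral (I /\<^sub>R 1 ^ DIM(real^'n)))
      (cbox (((\<chi> i. - of_int (m $ i)) - c) /\<^sub>R 1) (((\<chi> i. 1 - of_int (m $ i)) - c) /\<^sub>R 1))"
    by (rule has_integral_affinity'[OF G[unfolded Qc_def]]) simp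
  moreover have "((\<chi> i. - of_int (m $ i)) - c) = (\<chi> i. sg J i)" "((\<chi> i. 1 - of_int (m $ i)) - c) = (\<chi> i. 1 + sg J i)"
    by (auto simp: c_def vec_eq_iff)
  ultimately have G1: "((\<lambda>x. G (x + c)) has_integral I) (cbox (\<chi> i. sg J i) (\<chi> i. 1 + sg J i))" by simp
  have "((\<lambda>x. G ((\<chi> k. 2 * sg J k * x $ k) + c)) has_integral I /\<^sub>R \<bar>prod (\<lambda>i. 2 * sg J i) UNIV\<bar>)
      ((\<lambda>x. \<chi> k. x $ k / (2 * sg J k)) ` cbox (\<chi> i. sg J i) (\<chi> i. 1 + sg J i))"
  proof -
    have nz: "\<And>k. 2 * sg J k \<noteq> 0" using sg_nz by simp
    show ?thesis using has_integral_stretch_cart[OF G1, of "\<lambda>i. 2 * sg J i", OF nz] by simp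
  qed
  moreover have "(\<lambda>x. G ((\<chi> k. 2 * sg J k * x $ k) + c)) = (\<lambda>x. G (TJ m J x))"
    by (auto simp: TJ_def c_def vec_eq_iff fun_eq_iff intro!: arg_cong[where f=G])
  ultimately show ?thesis unfolding image_BoxJ abs_prod_mu by simp
qed

lemma BoxJ_iff: "x \<in> BoxJ J \<longleftrightarrow> (\<forall>i. (if i \<in> J then 1/2 else 0) \<le> x $ i \<and> x $ i \<le> (if i \<in> J then 1 else 1/2))"
  by (simp add: BoxJ_def mem_box_cart)

lemma union_BoxJ: "(\<Union>J\<in>Pow UNIV. BoxJ J) = cbox 0 (1 :: real^'n::finite)"
proof
  show "(\<Union>J\<in>Pow UNIV. BoxJ J) \<subseteq> cbox 0 (1 :: real^'n)"
  proof
    fix x :: "real^'n" assume "x \<in> (\<Union>J\<in>Pow UNIV. BoxJ J)"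
    then obtain J where "x \<in> BoxJ J" by blast
    then have h: "\<And>i. (if i \<in> J then 1/2 else 0) \<le> x $ i \<and> x $ i \<le> (if i \<in> J then 1 else 1/2)"
      by (simp add: BoxJ_iff)
    show "x \<in> cbox 0 1" unfolding mem_box_cart
    proof
      fix i show "0 $ i \<le> x $ i \<and> x $ i \<le> 1 $ i" using h[of i] by (cases "i \<in> J") auto
    qed
  qed
next
  show "cbox 0 (1 :: real^'n) \<subseteq> (\<Union>J\<in>Pow UNIV. BoxJ J)"
  proof
    fix x :: "real^'n" assume x: "x \<in> cbox 0 1"
    have "x \<in> BoxJ {i. x $ i \<ge> 1/2}"
      using x by (auto simp: BoxJ_iff mem_box_cart)
    then show "x \<in> (\<Union>J\<in>Pow UNIV. BoxJ J)" by blast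
  qed
qed

lemma neg_BoxJ: "pairwise (\<lambda>J J'. negligible (BoxJ J \<inter> BoxJ J')) (Pow (UNIV :: 'n::finite set))"
proof (rule pairwiseI)
  fix J J' :: "'n set" assume "J \<noteq> J'"
  then obtain i where i: "i \<in> J \<and> i \<notin> J' \<or> i \<notin> J \<and> i \<in> J'" by blast
  have "BoxJ J \<inter> BoxJ J' \<subseteq> {x. x \<bullet> axis i 1 = 1/2}"
  proof
    fix x :: "real^'n" assume "x \<in> BoxJ J \<inter> BoxJ J'"
    then have a: "(if i \<in> J then 1/2 else 0) \<le> x $ i \<and> x $ i \<le> (if i \<in> J then 1 else 1/2)"
      and b: "(if i \<in> J' then 1/2 else 0) \<le> x $ i \<and> x $ i \<le> (if i \<in> J' then 1 else 1/2)"
      by (auto simp: BoxJ_iff)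
    have "x $ i = 1/2" using i a b by auto
    then show "x \<in> {x. x \<bullet> axis i 1 = 1/2}" by (simp add: cart_eq_inner_axis[symmetric])
  qed
  moreover have "negligible {x :: real^'n. x \<bullet> axis i 1 = 1/2}"
    by (rule negligible_standard_hyperplane) (auto simp: Basis_vec_def)
  ultimately show "negligible (BoxJ J \<inter> BoxJ J')" using negligible_subset by blast
qed

lemma fold_cv:
  fixes G :: "'n::finite set \<Rightarrow> real^'n \<Rightarrow> 'b::banach" and H :: "real^'n \<Rightarrow> 'b"
  assumes G: "\<And>J. (G J has_integral I J) (Qc m)"
    and H: "\<And>J x. x \<in> BoxJ J \<Longrightarrow> H x = G J (TJ m J x)"
  shows "(H has_integral (\<Sum>J\<in>Pow UNIV. I J /\<^sub>R 2 ^ CARD('n))) (cbox 0 1)"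
proof -
  have "(H has_integral (\<Sum>J\<in>Pow UNIV. I J /\<^sub>R 2 ^ CARD('n))) (\<Union>J\<in>Pow UNIV. BoxJ J)"
  proof (rule has_integral_UN)
    fix J :: "'n set"
    show "(H has_integral I J /\<^sub>R 2 ^ CARD('n)) (BoxJ J)"
      by (rule has_integral_eq[OF _ piece[OF G]]) (use H in auto)
  qed (use neg_BoxJ in auto)
  then show ?thesis by (simp only: union_BoxJ)
qed

lemma abs_on_BoxJ: "x \<in> BoxJ J \<Longrightarrow> \<bar>2 * x $ i - 1\<bar> = sg J i * (2 * x $ i - 1)"
proof -
  assume "x \<in> BoxJ J"
  then have a: "(if i \<in> J then 1/2 else 0) \<le> x $ i \<and> x $ i \<le> (if i \<in> J then 1 else 1/2)"
    by (simp add: BoxJ_iff)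
  show ?thesis
  proof (cases "i \<in> J")
    case True
    then have "0 \<le> 2 * x $ i - 1" using a by auto
    then show ?thesis using True by (simp add: sg_def)
  next
    case False
    then have "2 * x $ i - 1 \<le> 0" using a by auto
    then show ?thesis using False by (simp add: sg_def)
  qed
qed

lemma T_on_BoxJ:
  assumes "x \<in> BoxJ J"
  shows "(\<chi> i. \<bar>2 * x $ i - 1\<bar>) - (\<chi> i. real_of_int (m $ i)) = TJ m J x"
  unfolding vec_eq_iff
proof
  fix i
  show "((\<chi> i. \<bar>2 * x $ i - 1\<bar>) - (\<chi> i. real_of_int (m $ i))) $ i = TJ m J x $ i"
    unfolding vector_minus_component vec_lambda_beta abs_on_BoxJ[OF assms] TJ_def
    by (simp add: algebra_simps)
qed

lemma x_from_TJ: "(sg J i * (TJ m J x $ i + of_int (m $ i)) + 1) / 2 = x $ i"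
proof -
  have "sg J i * (TJ m J x $ i + of_int (m $ i)) = sg J i * sg J i * (2 * x $ i - 1)"
    by (simp add: TJ_def algebra_simps)
  then show ?thesis by (simp add: sg_sq)
qed


definition Ev :: "int^'n::finite \<Rightarrow> real^'n \<Rightarrow> complex" where
  "Ev k x = cis (- 2 * pi * (\<Sum>i\<in>UNIV. real_of_int (k $ i) * x $ i))"

definition GJ :: "(real^'n::finite \<Rightarrow> real) \<Rightarrow> int^'n \<Rightarrow> int^'n \<Rightarrow> 'n set \<Rightarrow> real^'n \<Rightarrow> complex" where
  "GJ f k m J z = complex_of_real (f z) * Ev k (\<chi> i. (sg J i * (z $ i + of_int (m $ i)) + 1) / 2)"

lemma fourier_coeff_Ev: "fourier_coeff g k = (LINT x : cbox 0 1 | lborel. complex_of_real (g x) * Ev k x)"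
  by (simp add: fourier_coeff_def Ev_def)

lemma H_on_BoxJ:
  assumes "x \<in> BoxJ J"
  shows "complex_of_real (tent (shift f m) x) * Ev k x = GJ f k m J (TJ m J x)"
proof -
  have "tent (shift f m) x = f (TJ m J x)"
    by (simp add: tent_def shift_def T_on_BoxJ[OF assms])
  moreover have "(\<chi> i. (sg J i * (TJ m J x $ i + of_int (m $ i)) + 1) / 2) = x"
    by (simp add: vec_eq_iff x_from_TJ)
  ultimately show ?thesis by (simp add: GJ_def)
qed

lemma H_abs_on_BoxJ:
  assumes "x \<in> BoxJ J"
  shows "\<bar>tent (shift f m) x\<bar> = (\<lambda>z. \<bar>f z\<bar>) (TJ m J x)"
  by (simp add: tent_def shift_def T_on_BoxJ[OF assms])

lemma Qc_sets[measurable]: "Qc m \<in> sets lborel" by (simp add: Qc_def)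
lemma Qc_fin: "emeasure lborel (Qc m) < \<infinity>" unfolding Qc_def by (rule emeasure_lborel_cbox_finite)

lemma Qc_setint:
  fixes g :: "real^'n::finite \<Rightarrow> 'b::{banach, second_countable_topology}"
  assumes f: "L2 f" and gm: "g \<in> borel_measurable lborel" and b: "\<And>z. norm (g z) \<le> \<bar>f z\<bar>"
  shows "set_integrable lborel (Qc m) g"
  unfolding set_integrable_def
proof (rule Bochner_Integration.integrable_bound)
  have "integrable lborel (\<lambda>x. f x * indicator (Qc m) x)"
    by (rule loc_int[OF f _ Qc_sets Qc_fin, where M=1]) (auto simp: indicator_def)
  from integrable_abs[OF this] show "integrable lborel (\<lambda>x. \<bar>f x\<bar> * indicator (Qc m) x)"
    by (simp add: abs_mult)
  show "(\<lambda>x. indicator (Qc m) x *\<^sub>R g x) \<in> borel_measurable lborel" using gm by measurable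
  show "AE x in lborel. norm (indicator (Qc m) x *\<^sub>R g x) \<le> norm (\<bar>f x\<bar> * indicator (Qc m) x)"
    using b by (auto simp: indicator_def)
qed

lemma cont_Ev_aff: "continuous_on UNIV (\<lambda>z::real^'n::finite. Ev k (\<chi> i. (sg J i * (z $ i + of_int (m $ i)) + 1) / 2))"
  unfolding Ev_def by (intro continuous_intros) auto

lemma GJ_meas: "L2 f \<Longrightarrow> GJ f k m J \<in> borel_measurable lborel"
proof -
  assume f: "L2 f"
  have e: "(\<lambda>z::real^'a. Ev k (\<chi> i. (sg J i * (z $ i + of_int (m $ i)) + 1) / 2)) \<in> borel_measurable lborel"
    using borel_measurable_continuous_onI[OF cont_Ev_aff] by simp
  show ?thesis unfolding GJ_def[abs_def] using L2_meas[OF f] e by measurable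
qed

lemma norm_Ev: "norm (Ev k x) = 1" by (simp add: Ev_def)

lemma GJ_int: "L2 f \<Longrightarrow> GJ f k m J integrable_on Qc m"
  by (rule set_borel_integral_eq_integral(1), rule Qc_setint[OF _ GJ_meas])
     (auto simp: GJ_def norm_mult norm_Ev)

lemma absf_int: "L2 f \<Longrightarrow> (\<lambda>z. \<bar>f z\<bar>) integrable_on Qc m"
proof -
  assume f: "L2 f"
  have "(\<lambda>z. \<bar>f z\<bar>) \<in> borel_measurable lborel" using L2_meas[OF f] by measurable
  then have "set_integrable lborel (Qc m) (\<lambda>z. \<bar>f z\<bar>)" by (rule Qc_setint[OF f]) simp
  then show ?thesis by (rule set_borel_integral_eq_integral(1))
qed

lemma fold_H:
  assumes f: "L2 f"
  shows "((\<lambda>x. complex_of_real (tent (shift f m) x) * Ev k x) has_integral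
      (\<Sum>J\<in>Pow UNIV. integral (Qc m) (GJ f k m J) /\<^sub>R 2 ^ CARD('n))) (cbox 0 (1::real^'n::finite))"
  by (rule fold_cv[where G="GJ f k m"]) (use GJ_int[OF f] H_on_BoxJ in auto)

lemma fold_abs:
  assumes f: "L2 f"
  shows "(\<lambda>x. \<bar>tent (shift f m) x\<bar>) integrable_on (cbox 0 (1::real^'n::finite))"
proof -
  have "((\<lambda>x. \<bar>tent (shift f m) x\<bar>) has_integral (\<Sum>J\<in>Pow (UNIV::'n set). integral (Qc m) (\<lambda>z. \<bar>f z\<bar>) /\<^sub>R 2 ^ CARD('n)))
      (cbox 0 (1::real^'n))"
  proof (rule fold_cv[where G="\<lambda>J z. \<bar>f z\<bar>"])
    show "((\<lambda>z. \<bar>f z\<bar>) has_integral integral (Qc m) (\<lambda>z. \<bar>f z\<bar>)) (Qc m)" for J :: "'n set"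
      using absf_int[OF f] by blast
    fix J :: "'n set" and x :: "real^'n" assume "x \<in> BoxJ J"
    then show "\<bar>tent (shift f m) x\<bar> = \<bar>f (TJ m J x)\<bar>" by (rule H_abs_on_BoxJ)
  qed
  then show ?thesis by blast
qed

lemma tent_meas: "L2 f \<Longrightarrow> tent (shift f m) \<in> borel_measurable lborel"
proof -
  assume f: "L2 f"
  have c: "(\<lambda>x::real^'a. (\<chi> i. \<bar>2 * x $ i - 1\<bar>) - (\<chi> i. real_of_int (m $ i))) \<in> borel_measurable borel"
    by (intro borel_measurable_continuous_onI continuous_intros)
  have "(\<lambda>x. f ((\<chi> i. \<bar>2 * x $ i - 1\<bar>) - (\<chi> i. real_of_int (m $ i)))) \<in> borel_measurable borel"
    using measurable_compose[OF c] L2_meas[OF f] by simp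
  then show ?thesis by (simp add: tent_def[abs_def] shift_def)
qed

lemma fourier_HK:
  assumes f: "L2 f"
  shows "fourier_coeff (tent (shift f m)) k =
     integral (cbox 0 1) (\<lambda>x. complex_of_real (tent (shift f m) x) * Ev k (x::real^'n::finite))"
proof -
  let ?H = "\<lambda>x. complex_of_real (tent (shift f m) x) * Ev k x"
  have Hint: "?H integrable_on cbox 0 1" using fold_H[OF f] by blast
  have "?H absolutely_integrable_on cbox 0 1"
    by (rule absolutely_integrable_integrable_bound[OF _ Hint fold_abs[OF f, where m=m]]) (simp add: norm_mult norm_Ev)
  then have leb: "set_integrable lebesgue (cbox 0 1) ?H" by simp
  have Hm: "?H \<in> borel_measurable lborel"
  proof -
    have "(\<lambda>x::real^'n. Ev k x) \<in> borel_measurable lborel"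
      using borel_measurable_continuous_onI[of "Ev k"] unfolding Ev_def by (simp add: continuous_intros)
    then show ?thesis using tent_meas[OF f] by measurable
  qed
  have "set_integrable lborel (cbox 0 1) ?H"
    using leb unfolding set_integrable_def by (subst integrable_completion[symmetric]) (use Hm in measurable)
  from set_borel_integral_eq_integral(2)[OF this] show ?thesis by (simp add: fourier_coeff_Ev)
qed


lemma cis_sum: "finite A \<Longrightarrow> cis (\<Sum>i\<in>A. a i) = (\<Prod>i\<in>A. cis (a i))"
  by (simp add: cis_conv_exp sum_distrib_left exp_sum)

lemma cis_pair: "cis (-t) + cis t = complex_of_real (2 * cos t)"
  by (simp add: complex_eq_iff)

lemma pair_id:
  "cis (- pi * c * (y + 1)) + cis (- pi * c * (- y + 1)) = cis (- pi * c) * complex_of_real (2 * cos (pi * c * y))"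
proof -
  have "cis (- pi * c * (y + 1)) = cis (- pi * c) * cis (- (pi * c * y))" by (simp add: cis_mult algebra_simps)
  moreover have "cis (- pi * c * (- y + 1)) = cis (- pi * c) * cis (pi * c * y)" by (simp add: cis_mult algebra_simps)
  ultimately have "cis (- pi * c * (y + 1)) + cis (- pi * c * (- y + 1)) = cis (- pi * c) * (cis (- (pi * c * y)) + cis (pi * c * y))"
    by (simp add: distrib_left)
  then show ?thesis by (simp only: cis_pair)
qed

lemma Ev_J:
  "Ev k (\<chi> i. (sg J i * (z $ i + of_int (m $ i)) + 1) / 2) =
   (\<Prod>i\<in>UNIV. if i \<in> J then cis (- pi * of_int (k $ i) * ((z $ i + of_int (m $ i)) + 1))
                 else cis (- pi * of_int (k $ i) * (- (z $ i + of_int (m $ i)) + 1)))"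
proof -
  have "- 2 * pi * (\<Sum>i\<in>UNIV. real_of_int (k $ i) * ((sg J i * (z $ i + of_int (m $ i)) + 1) / 2)) =
        (\<Sum>i\<in>UNIV. - pi * of_int (k $ i) * (sg J i * (z $ i + of_int (m $ i)) + 1))"
    unfolding sum_distrib_left by (intro sum.cong) (auto simp: field_simps)
  then have "Ev k (\<chi> i. (sg J i * (z $ i + of_int (m $ i)) + 1) / 2) =
      (\<Prod>i\<in>UNIV. cis (- pi * of_int (k $ i) * (sg J i * (z $ i + of_int (m $ i)) + 1)))"
    by (simp add: Ev_def cis_sum)
  also have "\<dots> = (\<Prod>i\<in>UNIV. if i \<in> J then cis (- pi * of_int (k $ i) * ((z $ i + of_int (m $ i)) + 1))
                 else cis (- pi * of_int (k $ i) * (- (z $ i + of_int (m $ i)) + 1)))"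
    by (intro prod.cong) (auto simp: sg_def)
  finally show ?thesis .
qed

lemma sum_if_prod:
  fixes a b :: "'n::finite \<Rightarrow> 'c::comm_semiring_1"
  shows "(\<Sum>J\<in>Pow UNIV. \<Prod>i\<in>UNIV. if i \<in> J then a i else b i) = (\<Prod>i\<in>UNIV. a i + b i)"
proof -
  have "(\<Prod>i\<in>UNIV. a i + b i) = (\<Sum>X\<in>Pow UNIV. (\<Prod>i\<in>X. a i) * (\<Prod>i\<in>UNIV - X. b i))"
    by (rule prod_add) simp
  also have "\<dots> = (\<Sum>J\<in>Pow UNIV. \<Prod>i\<in>UNIV. if i \<in> J then a i else b i)"
  proof (rule sum.cong[OF refl])
    fix X :: "'n set"
    have "(\<Prod>i\<in>UNIV. if i \<in> X then a i else b i) = (\<Prod>i\<in>UNIV \<inter> {i. i \<in> X}. a i) * (\<Prod>i\<in>UNIV \<inter> - {i. i \<in> X}. b i)"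
      by (rule prod.If_cases) simp
    moreover have "UNIV \<inter> {i. i \<in> X} = X" "UNIV \<inter> - {i. i \<in> X} = UNIV - X" by auto
    ultimately show "(\<Prod>i\<in>X. a i) * (\<Prod>i\<in>UNIV - X. b i) = (\<Prod>i\<in>UNIV. if i \<in> X then a i else b i)" by simp
  qed
  finally show ?thesis ..
qed

definition Ck :: "int^'n::finite \<Rightarrow> complex" where "Ck k = (\<Prod>i\<in>UNIV. cis (- pi * of_int (k $ i)))"
definition cosp :: "int^'n::finite \<Rightarrow> int^'n \<Rightarrow> real^'n \<Rightarrow> real" where
  "cosp k m z = (\<Prod>i\<in>UNIV. cos (pi * of_int (k $ i) * (z $ i + of_int (m $ i))))"

lemma sum_identity:
  "(\<Sum>J\<in>Pow UNIV. GJ f k m J z /\<^sub>R 2 ^ CARD('n)) = Ck k * complex_of_real (f z * cosp k m (z :: real^'n::finite))"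
proof -
  define y where "y i = z $ i + of_int (m $ i)" for i
  have "(\<Sum>J\<in>Pow UNIV. GJ f k m J z /\<^sub>R 2 ^ CARD('n)) =
      complex_of_real (f z) * (\<Sum>J\<in>Pow UNIV. Ev k (\<chi> i. (sg J i * (z $ i + of_int (m $ i)) + 1) / 2)) /\<^sub>R 2 ^ CARD('n)"
    by (simp add: GJ_def sum_distrib_left scaleR_sum_right)
  also have "(\<Sum>J\<in>Pow UNIV. Ev k (\<chi> i. (sg J i * (z $ i + of_int (m $ i)) + 1) / 2)) =
      (\<Prod>i\<in>UNIV. cis (- pi * of_int (k $ i) * (y i + 1)) + cis (- pi * of_int (k $ i) * (- y i + 1)))"
    unfolding Ev_J y_def by (rule sum_if_prod)
  also have "\<dots> = (\<Prod>i\<in>UNIV. cis (- pi * of_int (k $ i)) * complex_of_real (2 * cos (pi * of_int (k $ i) * y i)))"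
    by (rule prod.cong[OF refl pair_id])
  also have "\<dots> = Ck k * complex_of_real (2 ^ CARD('n) * cosp k m z)"
    by (simp add: Ck_def cosp_def y_def prod.distrib)
  finally show ?thesis by (simp add: scaleR_conv_of_real field_simps)
qed

lemma psi_prod:
  "prodf (wpsi0 k m) z = (if z \<in> qbox m then cosp k m z else 0)"
proof (cases "z \<in> qbox m")
  case True
  then have "\<forall>i. 0 < z $ i + of_int (m $ i) \<and> z $ i + of_int (m $ i) < 1" by (simp add: mem_qbox)
  then show ?thesis using True
    by (simp add: prodf_def wpsi0_def sh_def psi_def cosp_def algebra_simps)
next
  case False
  then obtain i where "\<not> (0 < z $ i + of_int (m $ i) \<and> z $ i + of_int (m $ i) < 1)" by (auto simp: mem_qbox)
  then have "wpsi0 k m i (z $ i) = 0" by (auto simp: wpsi0_def sh_def psi_def)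
  then have "prodf (wpsi0 k m) z = 0" unfolding prodf_def by (intro prod_zero) auto
  then show ?thesis using False by simp
qed

lemma wpsi0_meas: "prodf (wpsi0 k m) \<in> borel_measurable lborel"
  by (rule borel_measurable_LIMSEQ_real[OF wPsi_lim good_meas[OF good_wPsi]])

lemma V_int: "L2 f \<Longrightarrow> integrable lborel (\<lambda>z. f z * prodf (wpsi0 k m) z)"
proof -
  assume f: "L2 f"
  have b: "\<bar>prodf (wpsi0 k m) z\<bar> \<le> 1 * indicator (qbox m) z" for z
    by (cases "z \<in> qbox m") (auto simp: psi_prod cosp_def abs_prod intro!: prod_le_1)
  show ?thesis by (rule loc_int[OF f wpsi0_meas sets_qbox emeasure_qbox b]) simp
qed

lemma qbox_Qc: "qbox m = box (\<chi> i. - of_int (m $ i)) (\<chi> i. 1 - of_int (m $ i))" "Qc m = cbox (\<chi> i. - of_int (m $ i)) (\<chi> i. 1 - of_int (m $ i))"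
  by (simp_all add: qbox_def Qc_def)

lemma V_part:
  assumes f: "L2 f"
  shows "((\<lambda>z. complex_of_real (f z * cosp k m z)) has_integral
     complex_of_real (\<integral>z. f z * prodf (wpsi0 k m) z \<partial>lborel)) (Qc m)"
proof -
  let ?V = "\<integral>z. f z * prodf (wpsi0 k m) z \<partial>lborel"
  have "((\<lambda>z. f z * prodf (wpsi0 k m) z) has_integral ?V) UNIV"
    by (rule has_integral_integral_lborel[OF V_int[OF f]])
  moreover have "(\<lambda>z. if z \<in> Qc m then f z * prodf (wpsi0 k m) z else 0) = (\<lambda>z. f z * prodf (wpsi0 k m) z)"
    using box_subset_cbox by (auto simp: fun_eq_iff psi_prod qbox_Qc)
  ultimately have "((\<lambda>z. f z * prodf (wpsi0 k m) z) has_integral ?V) (Qc m)"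
    using has_integral_restrict_UNIV[of "Qc m" "\<lambda>z. f z * prodf (wpsi0 k m) z" ?V] by simp
  then have "((\<lambda>z. f z * cosp k m z) has_integral ?V) (Qc m)"
    unfolding qbox_Qc(2)
    by (rule has_integral_spike[OF negligible_frontier_interval, rotated])
       (auto simp: psi_prod qbox_Qc(1))
  then show ?thesis by (rule has_integral_of_real)
qed

lemma fourier_abs:
  fixes f :: "real^'n::finite \<Rightarrow> real"
  assumes f: "L2 f"
  shows "cmod (fourier_coeff (tent (shift f m)) k) = \<bar>\<integral>z. f z * prodf (wpsi0 k m) z \<partial>lborel\<bar>"
proof -
  let ?V = "\<integral>z. f z * prodf (wpsi0 k m) z \<partial>lborel"
  let ?S = "\<Sum>J\<in>Pow (UNIV::'n set). integral (Qc m) (GJ f k m J) /\<^sub>R 2 ^ CARD('n)"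
  have four: "fourier_coeff (tent (shift f m)) k = ?S"
    using fourier_HK[OF f] fold_H[OF f] integral_unique by metis
  have "((\<lambda>z. \<Sum>J\<in>Pow (UNIV::'n set). GJ f k m J z /\<^sub>R 2 ^ CARD('n)) has_integral ?S) (Qc m)"
    by (intro has_integral_sum finite_Pow_iff[THEN iffD2] finite has_integral_cmul integrable_integral GJ_int[OF f])
  then have h1: "((\<lambda>z. Ck k * complex_of_real (f z * cosp k m z)) has_integral ?S) (Qc m)"
    by (simp only: sum_identity)
  have h2: "((\<lambda>z. Ck k * complex_of_real (f z * cosp k m z)) has_integral Ck k * complex_of_real ?V) (Qc m)"
    by (rule has_integral_mult_right[OF V_part[OF f]])
  have "?S = Ck k * complex_of_real ?V" using has_integral_unique[OF h1 h2] .
  moreover have "cmod (Ck k) = 1" unfolding Ck_def by (simp add: prod_norm[symmetric])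
  ultimately show ?thesis using four by (simp add: norm_mult)
qed


lemma card_Pow_UNIV: "card (Pow (UNIV :: 'n::finite set)) = 2 ^ CARD('n)"
  by (simp add: card_Pow)

lemma coeff_sq_bound:
  fixes f :: "real^'n::finite \<Rightarrow> real"
  assumes K1: "\<forall>k. \<forall>\<^sub>F j in sequentially.
     (\<forall>t. \<bar>Af (vj k j) t\<bar> \<le> K1 * kap k) \<and> (\<forall>t. \<bar>Bf (vj k j) t\<bar> \<le> K1 * kap k)"
    and f: "f \<in> H2mix"
  shows "(cmod (fourier_coeff (tent (shift f m)) k))\<^sup>2 \<le>
     (\<Prod>i\<in>UNIV. K1 * kap (k $ i))\<^sup>2 * 2 ^ CARD('n) *
       (\<Sum>e\<in>Pow UNIV. \<integral>x. (gder f e x)\<^sup>2 * indicator (qbox m) x \<partial>lborel)"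
proof -
  define P where "P = (\<Prod>i\<in>UNIV. K1 * kap (k $ i))"
  define a where "a e = (\<integral>x. \<bar>gder f e x\<bar> * indicator (qbox m) x \<partial>lborel)" for e
  have a0: "a e \<ge> 0" for e unfolding a_def by (rule Bochner_Integration.integral_nonneg) (auto simp: indicator_def)
  have c: "cmod (fourier_coeff (tent (shift f m)) k) \<le> P * (\<Sum>e\<in>Pow UNIV. a e)"
    using fourier_abs[OF H2mix_L2[OF f], of m k] core_bound[OF K1 f, of k m] by (simp add: P_def a_def)
  have "(cmod (fourier_coeff (tent (shift f m)) k))\<^sup>2 \<le> (P * (\<Sum>e\<in>Pow UNIV. a e))\<^sup>2"
    by (rule power_mono[OF c]) simp
  also have "\<dots> = P\<^sup>2 * (\<Sum>e\<in>Pow UNIV. a e)\<^sup>2" by (simp add: power_mult_distrib)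
  also have "\<dots> \<le> P\<^sup>2 * ((\<Sum>e\<in>Pow UNIV. (a e)\<^sup>2) * real (card (Pow (UNIV::'n set))))"
    by (rule mult_left_mono[OF sum_squared_le_sum_of_squares]) simp
  also have "\<dots> \<le> P\<^sup>2 * ((\<Sum>e\<in>Pow UNIV. \<integral>x. (gder f e x)\<^sup>2 * indicator (qbox m) x \<partial>lborel) * real (card (Pow (UNIV::'n set))))"
  proof (intro mult_left_mono mult_right_mono sum_mono)
    fix e :: "'n set"
    show "(a e)\<^sup>2 \<le> (\<integral>x. (gder f e x)\<^sup>2 * indicator (qbox m) x \<partial>lborel)"
      unfolding a_def by (rule cs_cube[OF conjunct1[OF gder[OF f]]])
  qed auto
  finally show ?thesis by (simp add: P_def card_Pow_UNIV mult_ac)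
qed

lemma partial_sums:
  fixes f :: "real^'n::finite \<Rightarrow> real"
  assumes K1: "\<forall>k. \<forall>\<^sub>F j in sequentially.
     (\<forall>t. \<bar>Af (vj k j) t\<bar> \<le> K1 * kap k) \<and> (\<forall>t. \<bar>Bf (vj k j) t\<bar> \<le> K1 * kap k)"
    and f: "f \<in> H2mix" and F: "finite F"
  shows "(\<Sum>m\<in>F. (cmod (fourier_coeff (tent (shift f m)) k))\<^sup>2) \<le>
     (\<Prod>i\<in>UNIV. K1 * kap (k $ i))\<^sup>2 * 2 ^ CARD('n) * (\<Sum>e\<in>Pow UNIV. \<integral>x. (gder f e x)\<^sup>2 \<partial>lborel)"
proof -
  define Q where "Q = (\<Prod>i\<in>UNIV. K1 * kap (k $ i))\<^sup>2 * 2 ^ CARD('n)"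
  have Q: "Q \<ge> 0" by (simp add: Q_def)
  have "(\<Sum>m\<in>F. (cmod (fourier_coeff (tent (shift f m)) k))\<^sup>2) \<le>
      (\<Sum>m\<in>F. Q * (\<Sum>e\<in>Pow UNIV. \<integral>x. (gder f e x)\<^sup>2 * indicator (qbox m) x \<partial>lborel))"
    by (rule sum_mono) (use coeff_sq_bound[OF K1 f] in \<open>simp add: Q_def\<close>)
  also have "\<dots> = Q * (\<Sum>e\<in>Pow UNIV. \<Sum>m\<in>F. \<integral>x. (gder f e x)\<^sup>2 * indicator (qbox m) x \<partial>lborel)"
    by (simp add: sum_distrib_left sum.swap[of _ F])
  also have "\<dots> \<le> Q * (\<Sum>e\<in>Pow UNIV. \<integral>x. (gder f e x)\<^sup>2 \<partial>lborel)"
    by (intro mult_left_mono[OF sum_mono Q] sum_cubes[OF conjunct1[OF gder[OF f]] F])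
  finally show ?thesis by (simp add: Q_def)
qed

lemma PK_id:
  fixes k :: "int^'n::finite"
  shows "(\<Prod>i\<in>UNIV. (1 + real_of_int \<bar>k $ i\<bar>)\<^sup>2) * (\<Prod>i\<in>UNIV. K1 * kap (k $ i)) = (8 * K1) ^ CARD('n)"
proof -
  have "(\<Prod>i\<in>UNIV. (1 + real_of_int \<bar>k $ i\<bar>)\<^sup>2) * (\<Prod>i\<in>UNIV. K1 * kap (k $ i)) =
      (\<Prod>i\<in>UNIV. (1 + real_of_int \<bar>k $ i\<bar>)\<^sup>2 * (K1 * kap (k $ i)))"
    by (simp add: prod.distrib)
  also have "\<dots> = (\<Prod>i\<in>(UNIV::'n set). 8 * K1)"
  proof (rule prod.cong[OF refl])
    fix i
    have "(1 + real_of_int \<bar>k $ i\<bar>)\<^sup>2 > 0" by (simp add: add_pos_nonneg)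
    then show "(1 + real_of_int \<bar>k $ i\<bar>)\<^sup>2 * (K1 * kap (k $ i)) = 8 * K1"
      by (simp add: kap_def field_simps)
  qed
  finally show ?thesis by simp
qed

lemma H2mix_norm_sq:
  "H2mix_norm f = sqrt (\<Sum>e\<in>Pow UNIV. \<integral>x. (gder f e x)\<^sup>2 \<partial>lborel)"
  by (simp add: H2mix_norm_def gder_def)

theorem theorem6p2:
  shows "\<exists>C>0. \<forall>(f :: real^'n::finite \<Rightarrow> real) \<in> H2mix. \<forall>k :: int^'n.
     (\<lambda>m. (cmod (fourier_coeff (tent (shift f m)) k))\<^sup>2) summable_on UNIV \<and>
     (\<Prod>i\<in>UNIV. (1 + real_of_int \<bar>k $ i\<bar>)\<^sup>2) *
       sqrt (\<Sum>\<^sub>\<infinity>m. (cmod (fourier_coeff (tent (shift f m)) k))\<^sup>2)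
     \<le> C * H2mix_norm f"
proof -
  obtain K1 where K1p: "K1 > 0" and K1: "\<forall>k. \<forall>\<^sub>F j in sequentially.
     (\<forall>t. \<bar>Af (vj k j) t\<bar> \<le> K1 * kap k) \<and> (\<forall>t. \<bar>Bf (vj k j) t\<bar> \<le> K1 * kap k)"
    using one_d_bound by blast
  define C where "C = (8 * K1) ^ CARD('n) * sqrt (2 ^ CARD('n))"
  have Cp: "C > 0" using K1p by (simp add: C_def)
  have "\<forall>(f :: real^'n \<Rightarrow> real) \<in> H2mix. \<forall>k :: int^'n.
     (\<lambda>m. (cmod (fourier_coeff (tent (shift f m)) k))\<^sup>2) summable_on UNIV \<and>
     (\<Prod>i\<in>UNIV. (1 + real_of_int \<bar>k $ i\<bar>)\<^sup>2) *
       sqrt (\<Sum>\<^sub>\<infinity>m. (cmod (fourier_coeff (tent (shift f m)) k))\<^sup>2)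
     \<le> C * H2mix_norm f"
  proof (intro ballI allI)
    fix f :: "real^'n \<Rightarrow> real" and k :: "int^'n"
    assume f: "f \<in> H2mix"
    define B where "B = (\<Prod>i\<in>UNIV. K1 * kap (k $ i))\<^sup>2 * 2 ^ CARD('n) * (\<Sum>e\<in>Pow UNIV. \<integral>x. (gder f e x)\<^sup>2 \<partial>lborel)"
    let ?c = "\<lambda>m. (cmod (fourier_coeff (tent (shift f m)) k))\<^sup>2"
    have ps: "\<And>F. finite F \<Longrightarrow> F \<subseteq> UNIV \<Longrightarrow> sum ?c F \<le> B"
      unfolding B_def using partial_sums[OF K1 f] by blast
    have sm: "?c summable_on UNIV"
      by (rule nonneg_bdd_above_summable_on) (use ps in \<open>auto intro!: bdd_aboveI\<close>)
    have inf: "(\<Sum>\<^sub>\<infinity>m. ?c m) \<le> B" by (rule infsum_le_finite_sums[OF sm ps])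
    have N0: "(\<Sum>e\<in>Pow UNIV. \<integral>x. (gder f e x)\<^sup>2 \<partial>lborel) \<ge> 0"
      by (intro sum_nonneg Bochner_Integration.integral_nonneg) simp
    have P0: "(\<Prod>i\<in>UNIV. K1 * kap (k $ i)) \<ge> 0" using K1p kap_pos by (simp add: prod_nonneg less_imp_le)
    have "(\<Prod>i\<in>UNIV. (1 + real_of_int \<bar>k $ i\<bar>)\<^sup>2) * sqrt (\<Sum>\<^sub>\<infinity>m. ?c m) \<le>
        (\<Prod>i\<in>UNIV. (1 + real_of_int \<bar>k $ i\<bar>)\<^sup>2) * sqrt B"
      by (rule mult_left_mono[OF real_sqrt_le_mono[OF inf]]) (simp add: prod_nonneg)
    also have "sqrt B = (\<Prod>i\<in>UNIV. K1 * kap (k $ i)) * sqrt (2 ^ CARD('n)) * H2mix_norm f"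
      using P0 N0 by (simp add: B_def real_sqrt_mult H2mix_norm_sq)
    also have "(\<Prod>i\<in>UNIV. (1 + real_of_int \<bar>k $ i\<bar>)\<^sup>2) * ((\<Prod>i\<in>UNIV. K1 * kap (k $ i)) * sqrt (2 ^ CARD('n)) * H2mix_norm f)
        = C * H2mix_norm f"
      using PK_id[of k K1] by (simp add: C_def mult_ac)
    finally show "?c summable_on UNIV \<and> (\<Prod>i\<in>UNIV. (1 + real_of_int \<bar>k $ i\<bar>)\<^sup>2) * sqrt (\<Sum>\<^sub>\<infinity>m. ?c m) \<le> C * H2mix_norm f"
      using sm by simp
  qed
  then show ?thesis using Cp by blast
qed


end
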